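(* Let $\Gamma$ be a compact subset of $\mathbb C\setminus\mathbf a(\mathbb S^1)$. There exist $C>0$ and $0<\kappa<1$ (depending on $\mathbf a$ and $\Gamma$) such that for all $z\in\Gamma$ and all $n>r+s$, $$\|Q_nR'_n(z)P_n-\mathcal H(z)\|\le C\kappa^n.$$
   Context: Fix integers $r\ge0,s\ge1$, complex $a_{-r},\dots,a_s$ with $a_s\ne0$, $\mathbf a(\lambda)=\sum_{k=-r}^sa_k\lambda^k$. For $n>r+s$, $C_n(\mathbf a)$ is the circulant matrix with $(i,j)$ entry $a_k$ if $j-i\equiv k\pmod n$ for some $k\in\{-r,\dots,s\}$, $0$ otherwise; $R'_n(z)=(z-C_n(\mathbf a))^{-1}$. $D_r\in M_r(\mathbb C)$ is upper triangular with $(D_r)_{pq}=a_{-r+q-p}$ ($q\ge p$); $E_s\in M_s(\mathbb C)$ is lower triangular with $(E_s)_{pq}=a_{s-p+q}$ ($p\ge q$). $P_n\in M_{n,r+s}(\mathbb C)$ has block rows (heights $r,n-r-s,s$) $(0_{r\times s}\ I_r)$, $0$, $(E_s\ 0_{s\times r})$; $Q_n\in M_{r+s,n}(\mathbb C)$ has block rows (heights $s,r$) $(I_s\ 0\ 0_{s\times r})$ and $(0_{r\times s}\ 0\ D_r)$. $\mathcal F(\omega)=(\omega^{p-q})_{1\le p,q\le r+s}$, $\mathcal D=\mathrm{diag}(I_s,D_r)$, $\mathcal E=\mathrm{diag}(E_s,I_r)$, and for $z\notin\mathbf a(\mathbb S^1)$, $$\mathcal H(z)=\frac1{2i\pi}\mathcal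 D\oint_{\mathbb S^1}\mathrm{diag}(\omega^sI_s,\omega^{-r}I_r)\frac{\mathcal F(\omega)}{\omega(z-\mathbf a(\omega))}d\omega\ \mathcal E$$ (contour integral over the positively oriented unit circle). $\|\cdot\|$ is the operator norm. *)

theory Defs
  imports "HOL-Complex_Analysis.Complex_Analysis" "Jordan_Normal_Form.Matrix"
begin

definition symb :: "nat \<Rightarrow> nat \<Rightarrow> (int \<Rightarrow> complex) \<Rightarrow> complex \<Rightarrow> complex" where
  "symb r s a x = (\<Sum>k\<in>{-int r..int s}. a k * x powi k)"

text \<open>Circulant matrix C_n(a) (indices 0-based; j - i mod n is shift invariant).\<close>
definition circ :: "nat \<Rightarrow> nat \<Rightarrow> (int \<Rightarrow> complex) \<Rightarrow> nat \<Rightarrow> complex mat" where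
  "circ r s a n = mat n n (\<lambda>(i,j).
     if \<exists>k\<in>{-int r..int s}. (int j - int i - k) mod int n = 0
     then a (THE k. k \<in> {-int r..int s} \<and> (int j - int i - k) mod int n = 0)
     else 0)"

definition resolv :: "nat \<Rightarrow> nat \<Rightarrow> (int \<Rightarrow> complex) \<Rightarrow> nat \<Rightarrow> complex \<Rightarrow> complex mat" where
  "resolv r s a n z = (THE B. B \<in> carrier_mat n n \<and>
      (z \<cdot>\<^sub>m 1\<^sub>m n - circ r s a n) * B = 1\<^sub>m n \<and> B * (z \<cdot>\<^sub>m 1\<^sub>m n - circ r s a n) = 1\<^sub>m n)"

definition Dmat :: "nat \<Rightarrow> (int \<Rightarrow> complex) \<Rightarrow> complex mat" where
  "Dmat r a = mat r r (\<lambda>(p,q). if q \<ge> p then a (- int r + int q - int p) else 0)"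

definition Emat :: "nat \<Rightarrow> (int \<Rightarrow> complex) \<Rightarrow> complex mat" where
  "Emat s a = mat s s (\<lambda>(p,q). if p \<ge> q then a (int s - int p + int q) else 0)"

text \<open>P_n : n x (r+s), block rows of heights r, n-r-s, s:
  (0_{r x s}  I_r), 0, (E_s  0_{s x r}).\<close>
definition Pmat :: "nat \<Rightarrow> nat \<Rightarrow> (int \<Rightarrow> complex) \<Rightarrow> nat \<Rightarrow> complex mat" where
  "Pmat r s a n = mat n (r + s) (\<lambda>(i,j).
     if i < r then (if j = s + i then 1 else 0)
     else if i \<ge> n - s then (if j < s then Emat s a $$ (i - (n - s), j) else 0)
     else 0)"

text \<open>Q_n : (r+s) x n, block rows of heights s, r:
  (I_s 0 0_{s x r}) and (0_{r x s} 0 D_r); column blocks of widths s, n-r-s, r.\<close>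
definition Qmat :: "nat \<Rightarrow> nat \<Rightarrow> (int \<Rightarrow> complex) \<Rightarrow> nat \<Rightarrow> complex mat" where
  "Qmat r s a n = mat (r + s) n (\<lambda>(i,j).
     if i < s then (if j = i then 1 else 0)
     else (if j \<ge> n - r then Dmat r a $$ (i - s, j - (n - r)) else 0))"

definition calD :: "nat \<Rightarrow> nat \<Rightarrow> (int \<Rightarrow> complex) \<Rightarrow> complex mat" where
  "calD r s a = four_block_mat (1\<^sub>m s) (0\<^sub>m s r) (0\<^sub>m r s) (Dmat r a)"

definition calE :: "nat \<Rightarrow> nat \<Rightarrow> (int \<Rightarrow> complex) \<Rightarrow> complex mat" where
  "calE r s a = four_block_mat (Emat s a) (0\<^sub>m s r) (0\<^sub>m r s) (1\<^sub>m r)"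

text \<open>H(z) = (1/(2 pi i)) calD (contour integral over the positively oriented unit circle of
  diag(w^s I_s, w^{-r} I_r) F(w) / (w (z - a(w))) dw) calE, with F(w) = (w^{p-q})_{p,q},
  the integral taken entrywise.\<close>
definition calH :: "nat \<Rightarrow> nat \<Rightarrow> (int \<Rightarrow> complex) \<Rightarrow> complex \<Rightarrow> complex mat" where
  "calH r s a z = calD r s a *
     mat (s + r) (s + r) (\<lambda>(p,q). (1 / (2 * pi * \<i>)) *
        contour_integral (circlepath 0 1)
          (\<lambda>w. (if p < s then w ^ s else w powi (- int r)) * w powi (int p - int q)
               / (w * (z - symb r s a w))))
     * calE r s a"

definition vnorm :: "complex vec \<Rightarrow> real" where
  "vnorm v = sqrt (\<Sum>i<dim_vec v. (cmod (v $ i))\<^sup>2)"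

definition opnorm :: "complex mat \<Rightarrow> real" where
  "opnorm M = Sup {vnorm (M *\<^sub>v v) | v. v \<in> carrier_vec (dim_col M) \<and> vnorm v \<le> 1}"

end

theory Submission
  imports Defs
begin
definition zeta :: "nat \<Rightarrow> complex" where
  "zeta n = exp (2 * of_real pi * \<i> / of_nat n)"

lemma zeta_pow_nat: "zeta n ^ j = exp(2 * of_real pi * \<i> * of_nat j / of_nat n)"
  unfolding zeta_def by (simp add: exp_of_nat_mult[symmetric] mult_ac)

lemma zeta_pow_eq_1: "n \<ge> 1 \<Longrightarrow> zeta n ^ j = 1 \<longleftrightarrow> n dvd j"
  using complex_root_unity_eq_1[of n j] by (simp add: zeta_pow_nat)

lemma zeta_n: "n \<ge> 1 \<Longrightarrow> zeta n ^ n = 1"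
  by (simp add: zeta_pow_eq_1)

lemma zeta_nz [simp]: "zeta n \<noteq> 0"
  by (simp add: zeta_def)

lemma norm_zeta [simp]: "norm (zeta n) = 1"
  unfolding zeta_def by (simp add: norm_exp_eq_Re)

lemma powi_mod:
  fixes w :: complex
  assumes "w ^ n = 1"
  shows "w powi (m mod int n) = w powi m"
proof (cases "n = 0")
  case True then show ?thesis by simp
next
  case False
  have w0: "w \<noteq> 0" using assms False by (cases n) auto
  have "m = m mod int n + int n * (m div int n)" by simp
  then have "w powi m = w powi (m mod int n) * w powi (int n * (m div int n))"
    by (metis power_int_add w0)
  also have "w powi (int n * (m div int n)) = (w powi int n) powi (m div int n)"
    by (simp add: power_int_mult)
  also have "w powi int n = 1" using assms by simp
  finally show ?thesis by simp
qed

lemma powi_periodic: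
  fixes w :: complex
  assumes "w ^ n = 1"
  shows "w powi (m + int n) = w powi m" "w powi (m - int n) = w powi m"
  using powi_mod[OF assms, of "m + int n"] powi_mod[OF assms, of m]
    powi_mod[OF assms, of "m - int n"] by simp_all

lemma zeta_powi_eq_1:
  assumes "n \<ge> 1"
  shows "zeta n powi m = 1 \<longleftrightarrow> int n dvd m"
proof -
  have "zeta n powi m = zeta n powi (m mod int n)"
    using powi_mod[OF zeta_n[OF assms]] by simp
  also have "\<dots> = zeta n ^ nat (m mod int n)"
    using assms by (simp add: power_int_def)
  finally have "zeta n powi m = 1 \<longleftrightarrow> n dvd nat (m mod int n)"
    using zeta_pow_eq_1[OF assms] by simp
  also have "\<dots> \<longleftrightarrow> nat (m mod int n) = 0"
  proof -
    have "nat (m mod int n) < n" using assms by (simp add: nat_less_iff)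
    then show ?thesis using dvd_imp_le by fastforce
  qed
  also have "\<dots> \<longleftrightarrow> int n dvd m"
  proof -
    have "0 \<le> m mod int n" using assms by simp
    then show ?thesis by (auto simp: dvd_eq_mod_eq_0)
  qed
  finally show ?thesis .
qed

lemma root_sum:
  assumes "n \<ge> 1"
  shows "(\<Sum>l<n. (zeta n powi m) ^ l) = (if int n dvd m then of_nat n else 0)"
proof (cases "int n dvd m")
  case True
  then have "zeta n powi m = 1" using zeta_powi_eq_1[OF assms] by simp
  then show ?thesis using True by simp
next
  case False
  let ?x = "zeta n powi m"
  have "?x \<noteq> 1" using False zeta_powi_eq_1[OF assms] by simp
  moreover have "?x ^ n = 1"
  proof -
    have "?x ^ n = zeta n powi (int n * m)" by (simp add: power_int_power' mult.commute)
    also have "\<dots> = (zeta n ^ n) powi m" by (simp add: power_int_power)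
    also have "\<dots> = 1" using zeta_n[OF assms] by simp
    finally show ?thesis .
  qed
  ultimately show ?thesis using False by (simp add: geometric_sum)
qed

lemma sum_dvd_delta:
  assumes "n \<ge> 1"
  shows "(\<Sum>m<n. if int n dvd (int m - x) then f m else 0) = f (nat (x mod int n))"
proof -
  have eq: "int n dvd (int m - x) \<longleftrightarrow> m = nat (x mod int n)" if "m < n" for m
  proof -
    have "int n dvd (int m - x) \<longleftrightarrow> int m mod int n = x mod int n"
      by (simp add: mod_eq_dvd_iff)
    also have "int m mod int n = int m" using that by simp
    also have "int m = x mod int n \<longleftrightarrow> m = nat (x mod int n)" using assms by auto
    finally show ?thesis .
  qed
  have "(\<Sum>m<n. if int n dvd (int m - x) then f m else 0) = (\<Sum>m<n. if m = nat (x mod int n) then f m else 0)"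
    by (rule sum.cong) (auto simp: eq)
  also have "\<dots> = f (nat (x mod int n))"
    using assms by (simp add: nat_less_iff)
  finally show ?thesis .
qed

lemma circ_index:
  assumes "i < n" "j < n"
  shows "circ r s a n $$ (i,j) = (if \<exists>k\<in>{-int r..int s}. (int j - int i - k) mod int n = 0
     then a (THE k. k \<in> {-int r..int s} \<and> (int j - int i - k) mod int n = 0)
     else 0)"
  unfolding circ_def using assms by (subst index_mat) auto
lemma circ_alt:
  assumes "n > r + s" "i < n" "j < n"
  shows "circ r s a n $$ (i,j) = (\<Sum>k\<in>{-int r..int s}. if int n dvd (int j - int i - k) then a k else 0)"
proof -
  let ?K = "{-int r..int s}"
  have uniq: "k = k'" if "k \<in> ?K" "k' \<in> ?K" "int n dvd (int j - int i - k)" "int n dvd (int j - int i - k')" for k k'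
  proof (rule ccontr)
    assume "k \<noteq> k'"
    have "int n dvd ((int j - int i - k) - (int j - int i - k'))" using that(3,4) by (rule dvd_diff)
    then have "int n dvd (k' - k)" by simp
    then have "int n \<le> \<bar>k' - k\<bar>" using \<open>k \<noteq> k'\<close> dvd_imp_le_int[of "k' - k" "int n"] by simp
    moreover have "\<bar>k' - k\<bar> \<le> int r + int s" using that(1,2) by auto
    ultimately show False using assms(1) by linarith
  qed
  show ?thesis
  proof (cases "\<exists>k\<in>?K. int n dvd (int j - int i - k)")
    case True
    then obtain k0 where k0: "k0 \<in> ?K" "int n dvd (int j - int i - k0)" by blast
    have the: "(THE k. k \<in> ?K \<and> (int j - int i - k) mod int n = 0) = k0"
    proof (rule the_equality)
      show "k0 \<in> ?K \<and> (int j - int i - k0) mod int n = 0" using k0 dvd_imp_mod_0 by blast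
      fix k assume "k \<in> ?K \<and> (int j - int i - k) mod int n = 0"
      then show "k = k0" using uniq[of k k0] k0 mod_0_imp_dvd by blast
    qed
    have "(\<Sum>k\<in>?K. if int n dvd (int j - int i - k) then a k else 0) = (\<Sum>k\<in>?K. if k = k0 then a k else 0)"
    proof (rule sum.cong)
      fix k assume "k \<in> ?K"
      show "(if int n dvd (int j - int i - k) then a k else 0) = (if k = k0 then a k else 0)"
      proof (cases "int n dvd (int j - int i - k)")
        case True
        have "k = k0" using uniq[OF \<open>k \<in> ?K\<close> k0(1) True k0(2)] .
        then show ?thesis using True by simp
      next
        case False
        then have "k \<noteq> k0" using k0(2) by blast
        then show ?thesis using False by simp
      qed
    qed simp
    also have "\<dots> = a k0" using k0 by simp
    moreover have ex: "\<exists>k\<in>?K. (int j - int i - k) mod int n = 0" using k0 dvd_imp_mod_0 by blast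
    ultimately show ?thesis using the by (simp only: circ_index[OF assms(2,3)] if_P[OF ex] if_True)
  next
    case False
    then have "(\<Sum>k\<in>?K. if int n dvd (int j - int i - k) then a k else 0) = 0"
      by (intro sum.neutral) auto
    moreover have ex: "\<not> (\<exists>k\<in>?K. (int j - int i - k) mod int n = 0)" using False mod_0_imp_dvd by blast
    ultimately show ?thesis by (simp only: circ_index[OF assms(2,3)] if_not_P[OF ex] if_False)
  qed
qed

lemma powi_mod_neg:
  fixes w :: complex
  assumes "w ^ n = 1"
  shows "w powi (- (x mod int n)) = w powi (- x)"
  using powi_mod[OF assms, of x] by (simp add: power_int_minus)

lemma circ_row:
  assumes "n > r + s" "i < n" "w ^ n = 1"
  shows "(\<Sum>m<n. circ r s a n $$ (i,m) * w powi int m) = symb r s a w * w powi int i"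
proof -
  let ?K = "{-int r..int s}"
  have n1: "n \<ge> 1" using assms by simp
  have w0: "w \<noteq> 0" using assms n1 by (metis power_0_left not_one_le_zero zero_neq_one)
  have "(\<Sum>m<n. circ r s a n $$ (i,m) * w powi int m)
      = (\<Sum>m<n. \<Sum>k\<in>?K. (if int n dvd (int m - (int i + k)) then a k * w powi int m else 0))"
    by (intro sum.cong refl) (auto simp: circ_alt[OF assms(1,2)] sum_distrib_right diff_diff_eq intro!: sum.cong)
  also have "\<dots> = (\<Sum>k\<in>?K. \<Sum>m<n. (if int n dvd (int m - (int i + k)) then a k * w powi int m else 0))"
    by (rule sum.swap)
  also have "\<dots> = (\<Sum>k\<in>?K. a k * w powi int (nat ((int i + k) mod int n)))"
    by (intro sum.cong refl) (rule sum_dvd_delta[OF n1])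
  also have "\<dots> = (\<Sum>k\<in>?K. a k * w powi (int i + k))"
    using n1 powi_mod[OF assms(3)] by (intro sum.cong refl) simp
  also have "\<dots> = symb r s a w * w powi int i"
    unfolding symb_def sum_distrib_right
    by (intro sum.cong refl) (simp add: power_int_add w0 mult_ac)
  finally show ?thesis .
qed

lemma circ_col:
  assumes "n > r + s" "j < n" "w ^ n = 1"
  shows "(\<Sum>m<n. w powi (- int m) * circ r s a n $$ (m,j)) = symb r s a w * w powi (- int j)"
proof -
  let ?K = "{-int r..int s}"
  have n1: "n \<ge> 1" using assms by simp
  have w0: "w \<noteq> 0" using assms n1 by (metis power_0_left not_one_le_zero zero_neq_one)
  have dv: "int n dvd (int j - int m - k) \<longleftrightarrow> int n dvd (int m - (int j - k))" for m k
  proof -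
    have "int j - int m - k = - (int m - (int j - k))" by simp
    then show ?thesis by (metis dvd_minus_iff)
  qed
  have "(\<Sum>m<n. w powi (- int m) * circ r s a n $$ (m,j))
      = (\<Sum>m<n. \<Sum>k\<in>?K. (if int n dvd (int m - (int j - k)) then a k * w powi (- int m) else 0))"
    using assms by (intro sum.cong refl) (auto simp: circ_alt sum_distrib_left dv mult_ac intro!: sum.cong)
  also have "\<dots> = (\<Sum>k\<in>?K. \<Sum>m<n. (if int n dvd (int m - (int j - k)) then a k * w powi (- int m) else 0))"
    by (rule sum.swap)
  also have "\<dots> = (\<Sum>k\<in>?K. a k * w powi (- int (nat ((int j - k) mod int n))))"
    by (intro sum.cong refl) (rule sum_dvd_delta[OF n1])
  also have "\<dots> = (\<Sum>k\<in>?K. a k * w powi (- (int j - k)))"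
    using n1 powi_mod_neg[OF assms(3)] by (intro sum.cong refl) simp
  also have "\<dots> = symb r s a w * w powi (- int j)"
    unfolding symb_def sum_distrib_right
    by (intro sum.cong refl) (simp add: power_int_add[symmetric] w0 mult_ac)
  finally show ?thesis .
qed

definition Bmat :: "nat \<Rightarrow> nat \<Rightarrow> (int \<Rightarrow> complex) \<Rightarrow> nat \<Rightarrow> complex \<Rightarrow> complex mat" where
  "Bmat r s a n z = mat n n (\<lambda>(i,j). (1 / of_nat n) *
     (\<Sum>l<n. (zeta n ^ l) powi (int i - int j) / (z - symb r s a (zeta n ^ l))))"

lemma zeta_l_n: "n \<ge> 1 \<Longrightarrow> (zeta n ^ l) ^ n = 1"
  by (metis power_mult[symmetric] mult.commute power_mult zeta_n power_one)

lemma norm_zeta_l [simp]: "norm (zeta n ^ l) = 1"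
  by (simp add: norm_power)

lemma delta_sum_ij:
  assumes "n \<ge> 1" "i < n" "j < n"
  shows "(1 / of_nat n) * (\<Sum>l<n. (zeta n ^ l) powi (int i - int j)) = (if i = j then 1 else (0::complex))"
proof -
  have "(\<Sum>l<n. (zeta n ^ l) powi (int i - int j)) = (\<Sum>l<n. (zeta n powi (int i - int j)) ^ l)"
    by (intro sum.cong refl) (simp add: power_int_power power_int_power' mult.commute)
  also have "\<dots> = (if int n dvd (int i - int j) then of_nat n else 0)"
    by (rule root_sum[OF assms(1)])
  also have "int n dvd (int i - int j) \<longleftrightarrow> i = j"
  proof
    assume d: "int n dvd (int i - int j)"
    show "i = j"
    proof (rule ccontr)
      assume "i \<noteq> j"
      then have "int n \<le> \<bar>int i - int j\<bar>" using d dvd_imp_le_int[of "int i - int j" "int n"] by simp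
      then show False using assms by linarith
    qed
  qed simp
  finally show ?thesis using assms by simp
qed

lemma row_action:
  assumes "n > r + s" "i < n" "w ^ n = 1"
  shows "(\<Sum>m<n. (z * (if i = m then 1 else 0) - circ r s a n $$ (i,m)) * w powi int m)
      = (z - symb r s a w) * w powi int i"
proof -
  have "(\<Sum>m<n. (z * (if i = m then 1 else 0) - circ r s a n $$ (i,m)) * w powi int m)
     = (\<Sum>m<n. (z * (if i = m then 1 else 0)) * w powi int m) - (\<Sum>m<n. circ r s a n $$ (i,m) * w powi int m)"
    by (simp add: sum_subtractf[symmetric] left_diff_distrib)
  also have "(\<Sum>m<n. (z * (if i = m then 1 else 0)) * w powi int m) = (\<Sum>m<n. (if i = m then z * w powi int m else 0))"
    by (intro sum.cong refl) simp
  also have "(\<Sum>m<n. (if i = m then z * w powi int m else 0)) = z * w powi int i"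
    using assms by simp
  also note circ_row[OF assms]
  finally show ?thesis by (simp add: left_diff_distrib)
qed

lemma col_action:
  assumes "n > r + s" "j < n" "w ^ n = 1"
  shows "(\<Sum>m<n. w powi (- int m) * (z * (if m = j then 1 else 0) - circ r s a n $$ (m,j)))
      = (z - symb r s a w) * w powi (- int j)"
proof -
  have "(\<Sum>m<n. w powi (- int m) * (z * (if m = j then 1 else 0) - circ r s a n $$ (m,j)))
     = (\<Sum>m<n. w powi (- int m) * (z * (if m = j then 1 else 0))) - (\<Sum>m<n. w powi (- int m) * circ r s a n $$ (m,j))"
    by (simp add: sum_subtractf[symmetric] right_diff_distrib)
  also have "(\<Sum>m<n. w powi (- int m) * (z * (if m = j then 1 else 0))) = (\<Sum>m<n. (if m = j then z * w powi (- int m) else 0))"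
    by (intro sum.cong refl) simp
  also have "(\<Sum>m<n. (if m = j then z * w powi (- int m) else 0)) = z * w powi (- int j)"
    using assms by simp
  also note circ_col[OF assms]
  finally show ?thesis by (simp add: left_diff_distrib)
qed

lemma sum_swap_mult:
  fixes f :: "'a \<Rightarrow> complex"
  shows "(\<Sum>m\<in>A. f m * (c * (\<Sum>l\<in>L. g l m))) = c * (\<Sum>l\<in>L. \<Sum>m\<in>A. f m * g l m)"
proof -
  have "(\<Sum>m\<in>A. f m * (c * (\<Sum>l\<in>L. g l m))) = (\<Sum>m\<in>A. \<Sum>l\<in>L. c * (f m * g l m))"
    by (simp add: sum_distrib_left mult_ac)
  also have "\<dots> = (\<Sum>l\<in>L. \<Sum>m\<in>A. c * (f m * g l m))" by (rule sum.swap)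
  also have "\<dots> = c * (\<Sum>l\<in>L. \<Sum>m\<in>A. f m * g l m)" by (simp add: sum_distrib_left)
  finally show ?thesis .
qed

lemma sum_swap_mult':
  fixes f :: "'a \<Rightarrow> complex"
  shows "(\<Sum>m\<in>A. (c * (\<Sum>l\<in>L. g l m)) * f m) = c * (\<Sum>l\<in>L. \<Sum>m\<in>A. g l m * f m)"
  using sum_swap_mult[of f c g L A] by (simp add: mult_ac)

lemma Amat_index:
  assumes "i < n" "m < n"
  shows "(z \<cdot>\<^sub>m 1\<^sub>m n - circ r s a n) $$ (i,m) = z * (if i = m then 1 else 0) - circ r s a n $$ (i,m)"
  using assms by (simp add: circ_def)

lemma mult_index_sum:
  assumes "i < dim_row A" "j < dim_col B" "dim_col A = dim_row B"
  shows "(A * B) $$ (i,j) = (\<Sum>m<dim_row B. A $$ (i,m) * B $$ (m,j))"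
  using assms by (simp add: scalar_prod_def lessThan_atLeast0)

lemma Bmat_index:
  assumes "i < n" "j < n"
  shows "Bmat r s a n z $$ (i,j) = (1 / of_nat n) *
     (\<Sum>l<n. (zeta n ^ l) powi (int i - int j) / (z - symb r s a (zeta n ^ l)))"
  using assms by (simp add: Bmat_def)

lemma circ_carrier: "circ r s a n \<in> carrier_mat n n"
  by (simp add: circ_def)

lemma Bmat_carrier: "Bmat r s a n z \<in> carrier_mat n n"
  by (simp add: Bmat_def)

lemma left_inv:
  assumes "n > r + s" and z: "\<And>w. norm w = 1 \<Longrightarrow> z \<noteq> symb r s a w"
  shows "(z \<cdot>\<^sub>m 1\<^sub>m n - circ r s a n) * Bmat r s a n z = 1\<^sub>m n"
proof (rule eq_matI)
  let ?A = "z \<cdot>\<^sub>m 1\<^sub>m n - circ r s a n"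
  have n1: "n \<ge> 1" using assms by simp
  fix i j assume ij: "i < dim_row (1\<^sub>m n :: complex mat)" "j < dim_col (1\<^sub>m n :: complex mat)"
  then have i: "i < n" and j: "j < n" by auto
  let ?X = "\<lambda>l. zeta n ^ l"
  have X0: "?X l \<noteq> 0" for l by simp
  have d0: "z - symb r s a (?X l) \<noteq> 0" for l using z[of "?X l"] by simp
  have "(?A * Bmat r s a n z) $$ (i,j) = (\<Sum>m<n. ?A $$ (i,m) * Bmat r s a n z $$ (m,j))"
    using i j by (subst mult_index_sum) (auto simp: circ_def Bmat_def)
  also have "\<dots> = (\<Sum>m<n. (z * (if i = m then 1 else 0) - circ r s a n $$ (i,m)) *
      ((1 / of_nat n) * (\<Sum>l<n. (?X l powi int m) * ((?X l) powi (- int j) / (z - symb r s a (?X l))))))"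
  proof (intro sum.cong refl)
    fix m assume "m \<in> {..<n}"
    then have m: "m < n" by simp
    have "Bmat r s a n z $$ (m,j) = (1 / of_nat n) * (\<Sum>l<n. (?X l powi int m) * ((?X l) powi (- int j) / (z - symb r s a (?X l))))"
    proof -
      have "(?X l) powi (int m - int j) = ?X l powi int m * (?X l) powi (- int j)" for l
        using power_int_add[of "?X l" "int m" "- int j"] X0[of l] by simp
      then show ?thesis using m j by (simp add: Bmat_index)
    qed
    then show "?A $$ (i,m) * Bmat r s a n z $$ (m,j) = (z * (if i = m then 1 else 0) - circ r s a n $$ (i,m)) *
      ((1 / of_nat n) * (\<Sum>l<n. (?X l powi int m) * ((?X l) powi (- int j) / (z - symb r s a (?X l)))))"
      using i m by (simp only: Amat_index)
  qed
  also have "\<dots> = (1 / of_nat n) * (\<Sum>l<n. \<Sum>m<n. (z * (if i = m then 1 else 0) - circ r s a n $$ (i,m)) *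
      ((?X l powi int m) * ((?X l) powi (- int j) / (z - symb r s a (?X l)))))"
    by (rule sum_swap_mult)
  also have "\<dots> = (1 / of_nat n) * (\<Sum>l<n. (\<Sum>m<n. (z * (if i = m then 1 else 0) - circ r s a n $$ (i,m)) *
      (?X l powi int m)) * ((?X l) powi (- int j) / (z - symb r s a (?X l))))"
    by (intro arg_cong[where f = "\<lambda>x. _ * x"] sum.cong refl) (simp only: sum_distrib_right mult.assoc)
  also have "\<dots> = (1 / of_nat n) * (\<Sum>l<n. (z - symb r s a (?X l)) * (?X l) powi int i *
      ((?X l) powi (- int j) / (z - symb r s a (?X l))))"
    using row_action[OF assms(1) i zeta_l_n[OF n1]] by simp
  also have "\<dots> = (1 / of_nat n) * (\<Sum>l<n. (?X l) powi (int i - int j))"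
    using d0 X0 by (intro arg_cong[where f = "\<lambda>x. _ * x"] sum.cong refl) (simp add: power_int_diff power_int_minus divide_inverse)
  also have "\<dots> = (if i = j then 1 else 0)"
    by (rule delta_sum_ij[OF n1 i j])
  finally show "(?A * Bmat r s a n z) $$ (i,j) = 1\<^sub>m n $$ (i,j)" using i j by simp
qed (auto simp: circ_def Bmat_def)

lemma right_inv:
  assumes "n > r + s" and z: "\<And>w. norm w = 1 \<Longrightarrow> z \<noteq> symb r s a w"
  shows "Bmat r s a n z * (z \<cdot>\<^sub>m 1\<^sub>m n - circ r s a n) = 1\<^sub>m n"
proof (rule eq_matI)
  let ?A = "z \<cdot>\<^sub>m 1\<^sub>m n - circ r s a n"
  have n1: "n \<ge> 1" using assms by simp
  fix i j assume ij: "i < dim_row (1\<^sub>m n :: complex mat)" "j < dim_col (1\<^sub>m n :: complex mat)"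
  then have i: "i < n" and j: "j < n" by auto
  let ?X = "\<lambda>l. zeta n ^ l"
  have X0: "?X l \<noteq> 0" for l by simp
  have d0: "z - symb r s a (?X l) \<noteq> 0" for l using z[of "?X l"] by simp
  have "(Bmat r s a n z * ?A) $$ (i,j) = (\<Sum>m<n. Bmat r s a n z $$ (i,m) * ?A $$ (m,j))"
    using i j by (subst mult_index_sum) (auto simp: circ_def Bmat_def)
  also have "\<dots> = (\<Sum>m<n. ((1 / of_nat n) * (\<Sum>l<n. (?X l powi (- int m)) * ((?X l) powi (int i) / (z - symb r s a (?X l)))))
       * (z * (if m = j then 1 else 0) - circ r s a n $$ (m,j)))"
  proof (intro sum.cong refl)
    fix m assume "m \<in> {..<n}"
    then have m: "m < n" by simp
    have "Bmat r s a n z $$ (i,m) = (1 / of_nat n) * (\<Sum>l<n. (?X l powi (- int m)) * ((?X l) powi (int i) / (z - symb r s a (?X l))))"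
    proof -
      have "(?X l) powi (int i - int m) = ?X l powi (- int m) * (?X l) powi (int i)" for l
        using power_int_add[of "?X l" "int i" "- int m"] X0[of l] by (simp add: mult.commute)
      then show ?thesis using m i by (simp add: Bmat_index)
    qed
    then show "Bmat r s a n z $$ (i,m) * ?A $$ (m,j) = ((1 / of_nat n) * (\<Sum>l<n. (?X l powi (- int m)) * ((?X l) powi (int i) / (z - symb r s a (?X l)))))
       * (z * (if m = j then 1 else 0) - circ r s a n $$ (m,j))"
      using j m by (simp only: Amat_index)
  qed
  also have "\<dots> = (1 / of_nat n) * (\<Sum>l<n. \<Sum>m<n. ((?X l powi (- int m)) * ((?X l) powi (int i) / (z - symb r s a (?X l))))
       * (z * (if m = j then 1 else 0) - circ r s a n $$ (m,j)))"
    by (rule sum_swap_mult')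
  also have "\<dots> = (1 / of_nat n) * (\<Sum>l<n. ((?X l) powi (int i) / (z - symb r s a (?X l))) *
       (\<Sum>m<n. (?X l powi (- int m)) * (z * (if m = j then 1 else 0) - circ r s a n $$ (m,j))))"
    by (intro arg_cong[where f = "\<lambda>x. _ * x"] sum.cong refl) (simp add: sum_distrib_left mult_ac)
  also have "\<dots> = (1 / of_nat n) * (\<Sum>l<n. ((?X l) powi (int i) / (z - symb r s a (?X l))) *
       ((z - symb r s a (?X l)) * (?X l) powi (- int j)))"
    using col_action[OF assms(1) j zeta_l_n[OF n1]] by simp
  also have "\<dots> = (1 / of_nat n) * (\<Sum>l<n. (?X l) powi (int i - int j))"
    using d0 X0 by (intro arg_cong[where f = "\<lambda>x. _ * x"] sum.cong refl) (simp add: power_int_diff power_int_minus divide_inverse)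
  also have "\<dots> = (if i = j then 1 else 0)"
    by (rule delta_sum_ij[OF n1 i j])
  finally show "(Bmat r s a n z * ?A) $$ (i,j) = 1\<^sub>m n $$ (i,j)" using i j by simp
qed (auto simp: circ_def Bmat_def)

lemma resolv_eq:
  assumes "n > r + s" and z: "\<And>w. norm w = 1 \<Longrightarrow> z \<noteq> symb r s a w"
  shows "resolv r s a n z = Bmat r s a n z"
  unfolding resolv_def
proof (rule the_equality)
  let ?A = "z \<cdot>\<^sub>m 1\<^sub>m n - circ r s a n"
  show "Bmat r s a n z \<in> carrier_mat n n \<and> ?A * Bmat r s a n z = 1\<^sub>m n \<and> Bmat r s a n z * ?A = 1\<^sub>m n"
    using left_inv[OF assms] right_inv[OF assms] Bmat_carrier by blast
  fix B assume B: "B \<in> carrier_mat n n \<and> ?A * B = 1\<^sub>m n \<and> B * ?A = 1\<^sub>m n"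
  have Ac: "?A \<in> carrier_mat n n" using circ_carrier[of r s a n] by (intro minus_carrier_mat) auto
  have Bc: "B \<in> carrier_mat n n" using B by blast
  have "B = B * 1\<^sub>m n" using right_mult_one_mat[OF Bc] by simp
  also have "\<dots> = B * (?A * Bmat r s a n z)" using left_inv[OF assms] by simp
  also have "\<dots> = (B * ?A) * Bmat r s a n z"
    using assoc_mult_mat[OF Bc Ac Bmat_carrier, of r s a z] by simp
  also have "\<dots> = Bmat r s a n z" using B left_mult_one_mat[OF Bmat_carrier] by simp
  finally show "B = Bmat r s a n z" .
qed

definition sig :: "nat \<Rightarrow> nat \<Rightarrow> nat \<Rightarrow> nat \<Rightarrow> nat" where
  "sig r s n x = (if x < s then x else n - r + (x - s))"
definition tau :: "nat \<Rightarrow> nat \<Rightarrow> nat \<Rightarrow> nat \<Rightarrow> nat" where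
  "tau r s n x = (if x < s then n - s + x else x - s)"
definition Q0 :: "nat \<Rightarrow> nat \<Rightarrow> nat \<Rightarrow> complex mat" where
  "Q0 r s n = mat (s + r) n (\<lambda>(x,i). if i = sig r s n x then 1 else 0)"
definition P0 :: "nat \<Rightarrow> nat \<Rightarrow> nat \<Rightarrow> complex mat" where
  "P0 r s n = mat n (s + r) (\<lambda>(i,x). if i = tau r s n x then 1 else 0)"

lemma calD_carrier: "calD r s a \<in> carrier_mat (s + r) (s + r)"
  unfolding calD_def by (rule four_block_carrier_mat) (auto simp: Dmat_def)
lemma calE_carrier: "calE r s a \<in> carrier_mat (s + r) (s + r)"
  unfolding calE_def by (rule four_block_carrier_mat) (auto simp: Emat_def)
lemma Q0_carrier: "Q0 r s n \<in> carrier_mat (s + r) n" by (simp add: Q0_def)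
lemma P0_carrier: "P0 r s n \<in> carrier_mat n (s + r)" by (simp add: P0_def)

lemma calD_index:
  assumes "p < s + r" "x < s + r"
  shows "calD r s a $$ (p,x) = (if p < s then (if x = p then 1 else 0)
     else if x < s then 0 else Dmat r a $$ (p - s, x - s))"
  using assms unfolding calD_def by (auto simp: Dmat_def)

lemma calE_index:
  assumes "x < s + r" "q < s + r"
  shows "calE r s a $$ (x,q) = (if x < s then (if q < s then Emat s a $$ (x,q) else 0)
     else if q < s then 0 else (if x = q then 1 else 0))"
  using assms unfolding calE_def by (auto simp: Emat_def)

lemma sig_eq:
  assumes "n > r + s" "x < s + r" "i < n"
  shows "i = sig r s n x \<longleftrightarrow> (i < s \<and> x = i) \<or> (n - r \<le> i \<and> x = s + (i - (n - r)))"
  using assms unfolding sig_def by auto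

lemma tau_eq:
  assumes "n > r + s" "x < s + r" "i < n"
  shows "i = tau r s n x \<longleftrightarrow> (n - s \<le> i \<and> x = i - (n - s)) \<or> (i < r \<and> x = s + i)"
  using assms unfolding tau_def by auto

lemma Q_fact:
  assumes "n > r + s"
  shows "Qmat r s a n = calD r s a * Q0 r s n"
proof (rule eq_matI)
  show "dim_row (Qmat r s a n) = dim_row (calD r s a * Q0 r s n)"
    using calD_carrier[of r s a] by (simp add: Qmat_def)
  show "dim_col (Qmat r s a n) = dim_col (calD r s a * Q0 r s n)"
    by (simp add: Qmat_def Q0_def)
  fix p i assume "p < dim_row (calD r s a * Q0 r s n)" "i < dim_col (calD r s a * Q0 r s n)"
  then have p: "p < s + r" and i: "i < n" using calD_carrier[of r s a] by (auto simp: Q0_def)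
  have "(calD r s a * Q0 r s n) $$ (p,i) = (\<Sum>x<s + r. calD r s a $$ (p,x) * Q0 r s n $$ (x,i))"
    using p i calD_carrier[of r s a] by (subst mult_index_sum) (auto simp: Q0_def)
  also have "\<dots> = (\<Sum>x<s + r. if (i < s \<and> x = i) \<or> (n - r \<le> i \<and> x = s + (i - (n - r))) then calD r s a $$ (p,x) else 0)"
  proof (intro sum.cong refl)
    fix x assume "x \<in> {..<s + r}"
    then have x: "x < s + r" by simp
    have "Q0 r s n $$ (x,i) = (if i = sig r s n x then 1 else 0)" using x i by (simp add: Q0_def)
    also have "\<dots> = (if (i < s \<and> x = i) \<or> (n - r \<le> i \<and> x = s + (i - (n - r))) then 1 else 0)"
      by (simp only: sig_eq[OF assms x i])
    finally show "calD r s a $$ (p,x) * Q0 r s n $$ (x,i) = (if (i < s \<and> x = i) \<or> (n - r \<le> i \<and> x = s + (i - (n - r))) then calD r s a $$ (p,x) else 0)"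
      by simp
  qed
  also have "\<dots> = (if i < s then calD r s a $$ (p,i) else if n - r \<le> i then calD r s a $$ (p, s + (i - (n - r))) else 0)"
  proof (cases "i < s")
    case True
    then have "\<not> n - r \<le> i" using assms by linarith
    then show ?thesis using True p by (simp add: assms)
  next
    case False
    show ?thesis
    proof (cases "n - r \<le> i")
      case True
      have "s + (i - (n - r)) < s + r" using i assms True by linarith
      then show ?thesis using True False by simp
    next
      case F2: False
      then show ?thesis using False by simp
    qed
  qed
  also have "\<dots> = Qmat r s a n $$ (p,i)"
  proof (cases "i < s")
    case True
    then have "\<not> n - r \<le> i" using assms by linarith
    then show ?thesis using True p i by (simp add: calD_index Qmat_def)
  next
    case False
    show ?thesis
    proof (cases "n - r \<le> i")
      case True
      have "s + (i - (n - r)) < s + r" using i assms True by linarith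
      moreover have "i \<noteq> p" if "p < s" using that False by simp
      moreover have "\<not> (s + i - (n - r) < s)" using True by linarith
      ultimately show ?thesis using True False p i by (simp add: calD_index Qmat_def)
    next
      case F2: False
      then show ?thesis using False p i by (simp add: Qmat_def)
    qed
  qed
  finally show "Qmat r s a n $$ (p,i) = (calD r s a * Q0 r s n) $$ (p,i)" by simp
qed

lemma P_fact:
  assumes "n > r + s"
  shows "Pmat r s a n = P0 r s n * calE r s a"
proof (rule eq_matI)
  show "dim_row (Pmat r s a n) = dim_row (P0 r s n * calE r s a)"
    by (simp add: Pmat_def P0_def)
  show "dim_col (Pmat r s a n) = dim_col (P0 r s n * calE r s a)"
    using calE_carrier[of r s a] by (simp add: Pmat_def)
  fix i q assume "i < dim_row (P0 r s n * calE r s a)" "q < dim_col (P0 r s n * calE r s a)"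
  then have i: "i < n" and q: "q < s + r" using calE_carrier[of r s a] by (auto simp: P0_def)
  have "(P0 r s n * calE r s a) $$ (i,q) = (\<Sum>x<s + r. P0 r s n $$ (i,x) * calE r s a $$ (x,q))"
    using q i calE_carrier[of r s a] by (subst mult_index_sum) (auto simp: P0_def)
  also have "\<dots> = (\<Sum>x<s + r. if (n - s \<le> i \<and> x = i - (n - s)) \<or> (i < r \<and> x = s + i) then calE r s a $$ (x,q) else 0)"
  proof (intro sum.cong refl)
    fix x assume "x \<in> {..<s + r}"
    then have x: "x < s + r" by simp
    have "P0 r s n $$ (i,x) = (if i = tau r s n x then 1 else 0)" using x i by (simp add: P0_def)
    also have "\<dots> = (if (n - s \<le> i \<and> x = i - (n - s)) \<or> (i < r \<and> x = s + i) then 1 else 0)"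
      by (simp only: tau_eq[OF assms x i])
    finally show "P0 r s n $$ (i,x) * calE r s a $$ (x,q) = (if (n - s \<le> i \<and> x = i - (n - s)) \<or> (i < r \<and> x = s + i) then calE r s a $$ (x,q) else 0)"
      by simp
  qed
  also have "\<dots> = Pmat r s a n $$ (i,q)"
  proof (cases "i < r")
    case True
    then have "\<not> n - s \<le> i" using assms by linarith
    moreover have "s + i < s + r" using True by simp
    ultimately show ?thesis using True q i by (simp add: calE_index Pmat_def)
  next
    case False
    show ?thesis
    proof (cases "n - s \<le> i")
      case True
      have "i - (n - s) < s" using i assms True by linarith
      moreover have "i - (n - s) < s + r" using i assms True by linarith
      ultimately show ?thesis using True False q i by (simp add: calE_index Pmat_def)
    next
      case F2: False
      then show ?thesis using False q i by (simp add: Pmat_def)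
    qed
  qed
  finally show "Pmat r s a n $$ (i,q) = (P0 r s n * calE r s a) $$ (i,q)" by simp
qed

lemma Q0_mult:
  assumes "X \<in> carrier_mat n c" "x < s + r" "j < c" "sig r s n x < n"
  shows "(Q0 r s n * X) $$ (x,j) = X $$ (sig r s n x, j)"
proof -
  have "(Q0 r s n * X) $$ (x,j) = (\<Sum>m<n. Q0 r s n $$ (x,m) * X $$ (m,j))"
    using assms by (subst mult_index_sum) (auto simp: Q0_def)
  also have "\<dots> = (\<Sum>m<n. if m = sig r s n x then X $$ (m,j) else 0)"
    using assms by (intro sum.cong refl) (auto simp: Q0_def)
  also have "\<dots> = X $$ (sig r s n x, j)" using assms by simp
  finally show ?thesis .
qed

lemma P0_mult:
  assumes "X \<in> carrier_mat c n" "j < c" "x < s + r" "tau r s n x < n"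
  shows "(X * P0 r s n) $$ (j,x) = X $$ (j, tau r s n x)"
proof -
  have "(X * P0 r s n) $$ (j,x) = (\<Sum>m<n. X $$ (j,m) * P0 r s n $$ (m,x))"
    using assms by (subst mult_index_sum) (auto simp: P0_def)
  also have "\<dots> = (\<Sum>m<n. if m = tau r s n x then X $$ (j,m) else 0)"
    using assms by (intro sum.cong refl) (auto simp: P0_def)
  also have "\<dots> = X $$ (j, tau r s n x)" using assms by simp
  finally show ?thesis .
qed

lemma sig_lt: "n > r + s \<Longrightarrow> x < s + r \<Longrightarrow> sig r s n x < n"
  unfolding sig_def by auto
lemma tau_lt: "n > r + s \<Longrightarrow> x < s + r \<Longrightarrow> tau r s n x < n"
  unfolding tau_def by auto

lemma opnorm_bound:
  assumes X: "X \<in> carrier_mat m k"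
  shows "opnorm X \<le> (\<Sum>i<m. \<Sum>j<k. cmod (X $$ (i,j)))"
  unfolding opnorm_def
proof (rule cSup_least)
  show "{vnorm (X *\<^sub>v v) |v. v \<in> carrier_vec (dim_col X) \<and> vnorm v \<le> 1} \<noteq> {}"
  proof -
    have "vnorm (0\<^sub>v k) \<le> 1" by (simp add: vnorm_def)
    moreover have "(0\<^sub>v k :: complex vec) \<in> carrier_vec (dim_col X)" using X by simp
    ultimately show ?thesis by blast
  qed
  fix y assume "y \<in> {vnorm (X *\<^sub>v v) |v. v \<in> carrier_vec (dim_col X) \<and> vnorm v \<le> 1}"
  then obtain v where v: "v \<in> carrier_vec k" "vnorm v \<le> 1" and y: "y = vnorm (X *\<^sub>v v)"
    using X by auto
  have dv: "dim_vec v = k" using v by simp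
  have s1: "(\<Sum>j<k. (cmod (v $ j))\<^sup>2) \<le> 1"
    using v(2) unfolding vnorm_def dv by simp
  have vj: "cmod (v $ j) \<le> 1" if "j < k" for j
  proof -
    have "(cmod (v $ j))\<^sup>2 \<le> (\<Sum>j<k. (cmod (v $ j))\<^sup>2)"
      using that by (intro member_le_sum) auto
    then have "(cmod (v $ j))\<^sup>2 \<le> 1" using s1 by linarith
    then show ?thesis by (simp add: power_le_one_iff abs_le_square_iff[symmetric])
  qed
  have comp: "cmod ((X *\<^sub>v v) $ i) \<le> (\<Sum>j<k. cmod (X $$ (i,j)))" if "i < m" for i
  proof -
    have "(X *\<^sub>v v) $ i = (\<Sum>j<k. X $$ (i,j) * v $ j)"
      using that X dv by (simp add: scalar_prod_def lessThan_atLeast0)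
    then have "cmod ((X *\<^sub>v v) $ i) \<le> (\<Sum>j<k. cmod (X $$ (i,j)) * cmod (v $ j))"
      by (metis (no_types, lifting) norm_mult norm_sum sum.cong)
    also have "\<dots> \<le> (\<Sum>j<k. cmod (X $$ (i,j)))"
      using vj by (intro sum_mono) (simp add: mult_left_le)
    finally show ?thesis .
  qed
  have "y = L2_set (\<lambda>i. cmod ((X *\<^sub>v v) $ i)) {..<m}"
    using y X unfolding vnorm_def L2_set_def by simp
  also have "\<dots> \<le> (\<Sum>i<m. cmod ((X *\<^sub>v v) $ i))"
    by (rule L2_set_le_sum) simp
  also have "\<dots> \<le> (\<Sum>i<m. \<Sum>j<k. cmod (X $$ (i,j)))"
    using comp by (intro sum_mono) simp
  finally show "y \<le> (\<Sum>i<m. \<Sum>j<k. cmod (X $$ (i,j)))" .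
qed

lemma triple_bound:
  assumes A: "A \<in> carrier_mat N N" and W: "W \<in> carrier_mat N N" and E: "E \<in> carrier_mat N N"
    and Wb: "\<And>x y. x < N \<Longrightarrow> y < N \<Longrightarrow> cmod (W $$ (x,y)) \<le> \<epsilon>"
  shows "(\<Sum>p<N. \<Sum>q<N. cmod ((A * (W * E)) $$ (p,q)))
     \<le> (\<Sum>p<N. \<Sum>q<N. \<Sum>x<N. \<Sum>y<N. cmod (A $$ (p,x)) * cmod (E $$ (y,q))) * \<epsilon>"
proof -
  have ent: "cmod ((A * (W * E)) $$ (p,q)) \<le> (\<Sum>x<N. \<Sum>y<N. cmod (A $$ (p,x)) * cmod (E $$ (y,q))) * \<epsilon>"
    if "p < N" "q < N" for p q
  proof -
    have "(A * (W * E)) $$ (p,q) = (\<Sum>x<N. A $$ (p,x) * (\<Sum>y<N. W $$ (x,y) * E $$ (y,q)))"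
    proof -
      have WE: "W * E \<in> carrier_mat N N" using W E by simp
      have "(A * (W * E)) $$ (p,q) = (\<Sum>x<N. A $$ (p,x) * (W * E) $$ (x,q))"
        using that A WE by (subst mult_index_sum) auto
      also have "\<dots> = (\<Sum>x<N. A $$ (p,x) * (\<Sum>y<N. W $$ (x,y) * E $$ (y,q)))"
        using that W E by (intro sum.cong refl) (subst mult_index_sum, auto)
      finally show ?thesis .
    qed
    then have "cmod ((A * (W * E)) $$ (p,q)) \<le> (\<Sum>x<N. cmod (A $$ (p,x)) * (\<Sum>y<N. cmod (W $$ (x,y)) * cmod (E $$ (y,q))))"
    proof -
      have "cmod (\<Sum>x<N. A $$ (p,x) * (\<Sum>y<N. W $$ (x,y) * E $$ (y,q)))
          \<le> (\<Sum>x<N. cmod (A $$ (p,x) * (\<Sum>y<N. W $$ (x,y) * E $$ (y,q))))" by (rule norm_sum)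
      also have "\<dots> \<le> (\<Sum>x<N. cmod (A $$ (p,x)) * (\<Sum>y<N. cmod (W $$ (x,y)) * cmod (E $$ (y,q))))"
      proof (intro sum_mono)
        fix x
        have "cmod (\<Sum>y<N. W $$ (x,y) * E $$ (y,q)) \<le> (\<Sum>y<N. cmod (W $$ (x,y) * E $$ (y,q)))" by (rule norm_sum)
        then have "cmod (\<Sum>y<N. W $$ (x,y) * E $$ (y,q)) \<le> (\<Sum>y<N. cmod (W $$ (x,y)) * cmod (E $$ (y,q)))"
          by (simp add: norm_mult)
        then show "cmod (A $$ (p,x) * (\<Sum>y<N. W $$ (x,y) * E $$ (y,q))) \<le> cmod (A $$ (p,x)) * (\<Sum>y<N. cmod (W $$ (x,y)) * cmod (E $$ (y,q)))"
          by (simp add: norm_mult mult_left_mono)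
      qed
      finally show ?thesis using \<open>(A * (W * E)) $$ (p,q) = _\<close> by simp
    qed
    also have "\<dots> \<le> (\<Sum>x<N. cmod (A $$ (p,x)) * (\<Sum>y<N. \<epsilon> * cmod (E $$ (y,q))))"
      using Wb by (intro sum_mono mult_left_mono mult_right_mono) auto
    also have "\<dots> = (\<Sum>x<N. \<Sum>y<N. cmod (A $$ (p,x)) * cmod (E $$ (y,q))) * \<epsilon>"
      by (simp add: sum_distrib_left sum_distrib_right mult_ac)
    finally show ?thesis .
  qed
  have "(\<Sum>p<N. \<Sum>q<N. cmod ((A * (W * E)) $$ (p,q)))
     \<le> (\<Sum>p<N. \<Sum>q<N. (\<Sum>x<N. \<Sum>y<N. cmod (A $$ (p,x)) * cmod (E $$ (y,q))) * \<epsilon>)"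
    using ent by (intro sum_mono) auto
  also have "\<dots> = (\<Sum>p<N. \<Sum>q<N. \<Sum>x<N. \<Sum>y<N. cmod (A $$ (p,x)) * cmod (E $$ (y,q))) * \<epsilon>"
    by (simp add: sum_distrib_right)
  finally show ?thesis .
qed

definition ann :: "real \<Rightarrow> real \<Rightarrow> complex set" where
  "ann lo hi = ball 0 hi - cball 0 lo"

lemma ann_mem: "w \<in> ann lo hi \<longleftrightarrow> lo < norm w \<and> norm w < hi"
  by (auto simp: ann_def)

lemma open_ann: "open (ann lo hi)"
  unfolding ann_def by (intro open_Diff) auto

lemma sphere_ann: "lo < \<rho> \<Longrightarrow> \<rho> < hi \<Longrightarrow> sphere 0 \<rho> \<subseteq> ann lo hi"
  by (auto simp: ann_mem)

lemma hom_ann: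
  assumes "0 \<le> lo" "lo < \<rho>1" "\<rho>1 < hi" "lo < \<rho>2" "\<rho>2 < hi"
  shows "homotopic_loops (ann lo hi) (circlepath 0 \<rho>1) (circlepath 0 \<rho>2)"
proof (rule homotopic_loops_linear)
  fix t :: real assume "t \<in> {0..1}"
  let ?e = "exp (2 * of_real pi * \<i> * of_real t)"
  have ne: "norm ?e = 1" by (simp add: norm_exp_eq_Re)
  show "closed_segment (circlepath 0 \<rho>1 t) (circlepath 0 \<rho>2 t) \<subseteq> ann lo hi"
  proof
    fix x assume "x \<in> closed_segment (circlepath 0 \<rho>1 t) (circlepath 0 \<rho>2 t)"
    then obtain u where u: "0 \<le> u" "u \<le> 1" and x: "x = (1 - u) *\<^sub>R (of_real \<rho>1 * ?e) + u *\<^sub>R (of_real \<rho>2 * ?e)"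
      unfolding closed_segment_def circlepath by auto
    have "x = of_real ((1 - u) * \<rho>1 + u * \<rho>2) * ?e"
      using x by (simp add: scaleR_conv_of_real algebra_simps)
    then have nx: "norm x = \<bar>(1 - u) * \<rho>1 + u * \<rho>2\<bar>" using ne by (simp only: norm_mult norm_of_real mult_1_right)
    have "lo < (1 - u) * \<rho>1 + u * \<rho>2"
    proof -
      have "(1 - u) * lo \<le> (1 - u) * \<rho>1" using u assms by (intro mult_left_mono) auto
      moreover have "u * lo \<le> u * \<rho>2" using u assms by (intro mult_left_mono) auto
      moreover have "(1 - u) * lo < (1 - u) * \<rho>1 \<or> u * lo < u * \<rho>2"
        using u assms by (cases "u = 0") auto
      moreover have "(1 - u) * lo + u * lo = lo" by (simp add: algebra_simps)
      ultimately show ?thesis by linarith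
    qed
    moreover have "(1 - u) * \<rho>1 + u * \<rho>2 < hi"
    proof -
      have "(1 - u) * \<rho>1 \<le> (1 - u) * hi" using u assms by (intro mult_left_mono) auto
      moreover have "u * \<rho>2 \<le> u * hi" using u assms by (intro mult_left_mono) auto
      moreover have "(1 - u) * \<rho>1 < (1 - u) * hi \<or> u * \<rho>2 < u * hi"
        using u assms by (cases "u = 0") auto
      moreover have "(1 - u) * hi + u * hi = hi" by (simp add: algebra_simps)
      ultimately show ?thesis by linarith
    qed
    ultimately show "x \<in> ann lo hi" using nx assms by (simp add: ann_mem)
  qed
qed auto

lemma cauchy_ann:
  assumes "f holomorphic_on ann lo hi" "0 \<le> lo" "lo < \<rho>1" "\<rho>1 < hi" "lo < \<rho>2" "\<rho>2 < hi"
  shows "contour_integral (circlepath 0 \<rho>1) f = contour_integral (circlepath 0 \<rho>2) f"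
  by (rule Cauchy_theorem_homotopic_loops[OF hom_ann[OF assms(2-)] open_ann assms(1)]) auto

lemma circ_integrable_div:
  assumes "f holomorphic_on ann lo hi" "lo < \<rho>" "\<rho> < hi" "0 < \<rho>" "\<And>u. norm u = \<rho> \<Longrightarrow> g u \<noteq> 0"
    "continuous_on (sphere 0 \<rho>) g"
  shows "(\<lambda>u. f u / g u) contour_integrable_on circlepath 0 \<rho>"
proof (rule contour_integrable_continuous_circlepath)
  have "continuous_on (sphere 0 \<rho>) f"
    using holomorphic_on_imp_continuous_on[OF assms(1)] sphere_ann[OF assms(2,3)]
    by (rule continuous_on_subset)
  then show "continuous_on (path_image (circlepath 0 \<rho>)) (\<lambda>u. f u / g u)"
    using assms by (auto intro!: continuous_intros)
qed

lemma ann_point: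
  assumes hol: "f holomorphic_on ann lo hi" and "0 \<le> lo" "lo < \<rho>2" "\<rho>2 < 1" "1 < \<rho>1" "\<rho>1 < hi"
    and w: "norm \<omega> = 1"
  shows "2 * of_real pi * \<i> * f \<omega> = contour_integral (circlepath 0 \<rho>1) (\<lambda>u. f u / (u - \<omega>))
           - contour_integral (circlepath 0 \<rho>2) (\<lambda>u. f u / (u - \<omega>))"
proof -
  define F where "F = (\<lambda>z. if z = \<omega> then deriv f \<omega> else (f z - f \<omega>)/(z - \<omega>))"
  have holF: "F holomorphic_on ann lo hi"
    unfolding F_def by (rule pole_lemma_open[OF hol open_ann])
  have eq: "contour_integral (circlepath 0 \<rho>1) F = contour_integral (circlepath 0 \<rho>2) F"
    using assms by (intro cauchy_ann[OF holF]) auto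
  have ne: "u - \<omega> \<noteq> 0" if "norm u = \<rho>" "\<rho> \<noteq> 1" for u \<rho> using that w by auto
  have cg: "continuous_on (sphere 0 \<rho>) (\<lambda>u. u - \<omega>)" for \<rho> by (intro continuous_intros)
  define I1 where "I1 = contour_integral (circlepath 0 \<rho>1) (\<lambda>u. f u / (u - \<omega>))"
  define I2 where "I2 = contour_integral (circlepath 0 \<rho>2) (\<lambda>u. f u / (u - \<omega>))"
  have h1: "((\<lambda>u. f u / (u - \<omega>)) has_contour_integral I1) (circlepath 0 \<rho>1)"
    unfolding I1_def using assms ne[of _ \<rho>1]
    by (intro has_contour_integral_integral circ_integrable_div[OF hol _ _ _ _ cg]) auto
  have h2: "((\<lambda>u. f u / (u - \<omega>)) has_contour_integral I2) (circlepath 0 \<rho>2)"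
    unfolding I2_def using assms ne[of _ \<rho>2]
    by (intro has_contour_integral_integral circ_integrable_div[OF hol _ _ _ _ cg]) auto
  have k1: "((\<lambda>u. 1 / (u - \<omega>)) has_contour_integral (2 * of_real pi * \<i>)) (circlepath 0 \<rho>1)"
    using Cauchy_integral_circlepath[of 0 \<rho>1 "\<lambda>_. 1" \<omega>] assms by simp
  have k2: "((\<lambda>u. 1 / (u - \<omega>)) has_contour_integral 0) (circlepath 0 \<rho>2)"
  proof (rule Cauchy_theorem_disc_simple[of _ 0 1])
    show "(\<lambda>u. 1 / (u - \<omega>)) holomorphic_on ball 0 1"
      using w by (intro holomorphic_intros) auto
    show "path_image (circlepath 0 \<rho>2) \<subseteq> ball 0 1" using assms by auto
  qed auto
  have Feq: "F x = f x / (x - \<omega>) - f \<omega> * (1 / (x - \<omega>))" if "x \<noteq> \<omega>" for x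
    using that by (simp add: F_def diff_divide_distrib)
  have "(F has_contour_integral (I1 - f \<omega> * (2 * of_real pi * \<i>))) (circlepath 0 \<rho>1)"
  proof (rule has_contour_integral_eq[OF has_contour_integral_diff[OF h1 has_contour_integral_lmul[OF k1]]])
    fix x assume "x \<in> path_image (circlepath 0 \<rho>1)"
    then have "x \<noteq> \<omega>" using assms by auto
    then show "f x / (x - \<omega>) - f \<omega> * (1 / (x - \<omega>)) = F x" using Feq by simp
  qed
  then have c1: "contour_integral (circlepath 0 \<rho>1) F = I1 - f \<omega> * (2 * of_real pi * \<i>)"
    by (rule contour_integral_unique)
  have "(F has_contour_integral (I2 - f \<omega> * 0)) (circlepath 0 \<rho>2)"
  proof (rule has_contour_integral_eq[OF has_contour_integral_diff[OF h2 has_contour_integral_lmul[OF k2]]])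
    fix x assume "x \<in> path_image (circlepath 0 \<rho>2)"
    then have "x \<noteq> \<omega>" using assms by auto
    then show "f x / (x - \<omega>) - f \<omega> * (1 / (x - \<omega>)) = F x" using Feq by simp
  qed
  then have c2: "contour_integral (circlepath 0 \<rho>2) F = I2"
    using contour_integral_unique by fastforce
  show ?thesis using eq c1 c2 unfolding I1_def[symmetric] I2_def[symmetric] by (simp add: algebra_simps)
qed

lemma kernel_sum:
  assumes n1: "n \<ge> 1" and u: "u ^ n \<noteq> 1"
  shows "(\<Sum>l<n. 1 / (u - zeta n ^ l)) = of_nat n * u ^ (n - 1) / (u ^ n - 1)"
proof -
  have un: "u ^ n - 1 \<noteq> 0" using u by simp
  have one: "1 / (u - zeta n ^ l) = (\<Sum>i<n. u ^ (n - Suc i) * (zeta n ^ l) ^ i) / (u ^ n - 1)" for l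
  proof -
    have wn: "(zeta n ^ l) ^ n = 1" by (rule zeta_l_n[OF n1])
    have "u ^ n - 1 = (u - zeta n ^ l) * (\<Sum>i<n. (zeta n ^ l) ^ (n - Suc i) * u ^ i)"
      using power_diff_sumr2[of u n "zeta n ^ l"] wn by simp
    moreover have "(\<Sum>i<n. (zeta n ^ l) ^ (n - Suc i) * u ^ i) = (\<Sum>i<n. u ^ (n - Suc i) * (zeta n ^ l) ^ i)"
      by (rule sum.reindex_bij_witness[where i = "\<lambda>i. n - Suc i" and j = "\<lambda>i. n - Suc i"]) (auto simp: mult.commute)
    ultimately have "u ^ n - 1 = (u - zeta n ^ l) * (\<Sum>i<n. u ^ (n - Suc i) * (zeta n ^ l) ^ i)" by simp
    moreover have "u - zeta n ^ l \<noteq> 0" using u wn by auto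
    ultimately show ?thesis using un by (simp add: field_simps)
  qed
  have "(\<Sum>l<n. 1 / (u - zeta n ^ l)) = (\<Sum>l<n. \<Sum>i<n. u ^ (n - Suc i) * (zeta n ^ l) ^ i) / (u ^ n - 1)"
    by (simp add: one sum_divide_distrib)
  also have "(\<Sum>l<n. \<Sum>i<n. u ^ (n - Suc i) * (zeta n ^ l) ^ i) = (\<Sum>i<n. u ^ (n - Suc i) * (\<Sum>l<n. (zeta n powi int i) ^ l))"
    by (subst sum.swap) (simp add: sum_distrib_left power_mult[symmetric] mult.commute)
  also have "\<dots> = (\<Sum>i<n. if i = 0 then u ^ (n - 1) * of_nat n else 0)"
  proof (intro sum.cong refl)
    fix i assume "i \<in> {..<n}"
    then have i: "i < n" by simp
    have "int n dvd int i \<longleftrightarrow> i = 0"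
    proof
      assume "int n dvd int i"
      then have "n dvd i" by simp
      then show "i = 0" using i by (metis dvd_imp_le not_le not_gr0)
    qed simp
    then show "u ^ (n - Suc i) * (\<Sum>l<n. (zeta n powi int i) ^ l) = (if i = 0 then u ^ (n - 1) * of_nat n else 0)"
      using root_sum[OF n1, of "int i"] by simp
  qed
  also have "\<dots> = u ^ (n - 1) * of_nat n" using n1 by simp
  finally show ?thesis by (simp add: mult.commute)
qed

lemma K1_bound:
  fixes u :: complex
  assumes "n \<ge> 1" "norm u = \<rho>" "\<rho> > 1"
  shows "norm (u ^ (n - 1) / (u ^ n - 1) - 1 / u) \<le> 1 / (\<rho> * (\<rho> ^ n - 1))"
proof -
  have u0: "u \<noteq> 0" using assms by auto
  have pn: "\<rho> ^ n > 1" using assms by (simp add: one_less_power)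
  have nn: "norm (u ^ n - 1) \<ge> \<rho> ^ n - 1"
    using norm_triangle_ineq2[of "u ^ n" 1] assms by (simp add: norm_power)
  have np: "norm (u ^ n - 1) > 0" using nn pn by linarith
  have un: "u ^ n - 1 \<noteq> 0"
  proof
    assume "u ^ n - 1 = 0"
    then have "norm (u ^ n - 1) = 0" by (simp only: norm_zero)
    then show False using np by simp
  qed
  have "u * u ^ (n - 1) = u ^ n" using assms(1) by (metis Suc_diff_le diff_Suc_1 power_Suc)
  then have "u ^ (n - 1) / (u ^ n - 1) - 1 / u = 1 / (u * (u ^ n - 1))"
    using u0 un by (simp add: field_simps)
  then have "norm (u ^ (n - 1) / (u ^ n - 1) - 1 / u) = 1 / (\<rho> * norm (u ^ n - 1))"
    using assms by (simp add: norm_mult norm_divide)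
  also have "\<dots> \<le> 1 / (\<rho> * (\<rho> ^ n - 1))"
    using nn pn np assms by (intro divide_left_mono mult_left_mono mult_pos_pos) auto
  finally show ?thesis .
qed

lemma K2_bound:
  fixes u :: complex
  assumes "n \<ge> 1" "norm u = \<rho>" "\<rho> > 0" "\<rho> < 1"
  shows "norm (u ^ (n - 1) / (u ^ n - 1)) \<le> \<rho> ^ (n - 1) / (1 - \<rho> ^ n)"
proof -
  have pn: "\<rho> ^ n < 1" using assms by (simp add: power_less_one_iff)
  have nn: "norm (u ^ n - 1) \<ge> 1 - \<rho> ^ n"
    using norm_triangle_ineq3[of 1 "u ^ n"] assms by (simp add: norm_power norm_minus_commute)
  have "norm (u ^ (n - 1) / (u ^ n - 1)) = \<rho> ^ (n - 1) / norm (u ^ n - 1)"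
    using assms by (simp add: norm_divide norm_power)
  also have "\<dots> \<le> \<rho> ^ (n - 1) / (1 - \<rho> ^ n)"
  proof -
    have "norm (u ^ n - 1) > 0" using nn pn by linarith
    then show ?thesis using nn pn assms by (intro divide_left_mono mult_pos_pos) auto
  qed
  finally show ?thesis .
qed

lemma final_arith:
  fixes \<rho>2 M :: real
  assumes "0 < \<rho>2" "\<rho>2 < 1" "n \<ge> 1" "0 \<le> M"
  shows "(M * (1 / ((1/\<rho>2) * ((1/\<rho>2) ^ n - 1))) * (2 * pi * (1/\<rho>2)) + M * (\<rho>2 ^ (n - 1) / (1 - \<rho>2 ^ n)) * (2 * pi * \<rho>2)) / (2 * pi)
     \<le> 2 * M * \<rho>2 ^ n / (1 - \<rho>2)"
proof -
  define t where "t = \<rho>2 ^ n"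
  have t0: "0 < t" using assms by (simp add: t_def)
  have t1: "t \<le> \<rho>2" using assms unfolding t_def by (metis power_decreasing power_one_right less_imp_le)
  have t2: "t < 1" using t1 assms by simp
  have p1: "(1/\<rho>2) ^ n = 1 / t" by (simp add: t_def power_one_over)
  have p2: "\<rho>2 ^ (n - 1) * \<rho>2 = t" unfolding t_def using assms(3)
    by (metis Suc_diff_le diff_Suc_1 power_Suc2)
  have "(M * (1 / ((1/\<rho>2) * ((1/\<rho>2) ^ n - 1))) * (2 * pi * (1/\<rho>2)) + M * (\<rho>2 ^ (n - 1) / (1 - \<rho>2 ^ n)) * (2 * pi * \<rho>2)) / (2 * pi)
     = M * (1 / (1 / t - 1)) + M * ((\<rho>2 ^ (n - 1) * \<rho>2) / (1 - t))"
  proof -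
    have q: "1 / t - 1 \<noteq> 0" using t0 t2 by (simp add: field_simps)
    have T1: "M * (1 / ((1/\<rho>2) * ((1/\<rho>2) ^ n - 1))) * (2 * pi * (1/\<rho>2)) = 2 * pi * (M * (1 / (1 / t - 1)))"
      unfolding p1 using assms q by (simp add: field_simps)
    have T2: "M * (\<rho>2 ^ (n - 1) / (1 - \<rho>2 ^ n)) * (2 * pi * \<rho>2) = 2 * pi * (M * ((\<rho>2 ^ (n - 1) * \<rho>2) / (1 - t)))"
      unfolding t_def by (simp add: field_simps)
    show ?thesis unfolding T1 T2 by (simp add: field_simps)
  qed
  also have "\<dots> = 2 * M * t / (1 - t)"
  proof -
    have "1 / (1 / t - 1) = t / (1 - t)" using t0 t2 by (simp add: field_simps)
    moreover have "M * (t / (1 - t)) + M * (t / (1 - t)) = 2 * M * t / (1 - t)"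
    proof -
      have "2 * M * t / (1 - t) = 2 * (M * (t / (1 - t)))" by simp
      then show ?thesis by (simp only: mult_2)
    qed
    ultimately show ?thesis unfolding p2 by simp
  qed
  also have "\<dots> \<le> 2 * M * t / (1 - \<rho>2)"
    using t0 t1 t2 assms by (intro divide_left_mono) auto
  finally show ?thesis by (simp add: t_def)
qed

lemma riemann_core:
  assumes hol: "f holomorphic_on ann lo hi" and lo: "0 \<le> lo" "lo < \<rho>2" and r2: "0 < \<rho>2" "\<rho>2 < 1"
    and r1: "1 / \<rho>2 < hi" and n1: "n \<ge> 1" and M: "0 \<le> M"
    and fb: "\<And>u. norm u = 1 / \<rho>2 \<or> norm u = \<rho>2 \<Longrightarrow> norm (f u) \<le> M"
  shows "norm ((1 / of_nat n) * (\<Sum>l<n. f (zeta n ^ l))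
      - (1 / (2 * of_real pi * \<i>)) * contour_integral (circlepath 0 1) (\<lambda>u. f u / u))
     \<le> 2 * M * \<rho>2 ^ n / (1 - \<rho>2)"
proof -
  define \<rho>1 where "\<rho>1 = 1 / \<rho>2"
  have r1g: "1 < \<rho>1" using r2 by (simp add: \<rho>1_def)
  have r1h: "\<rho>1 < hi" using r1 by (simp add: \<rho>1_def)
  have lo1: "lo < \<rho>1" using lo r2 r1g by linarith
  define c where "c = 2 * of_real pi * \<i>"
  have c0: "c \<noteq> 0" by (simp add: c_def)
  have nc: "norm c = 2 * pi" by (simp add: c_def norm_mult)
  define J1 where "J1 = (\<lambda>l. contour_integral (circlepath 0 \<rho>1) (\<lambda>u. f u / (u - zeta n ^ l)))"
  define J2 where "J2 = (\<lambda>l. contour_integral (circlepath 0 \<rho>2) (\<lambda>u. f u / (u - zeta n ^ l)))"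
  have pt: "c * f (zeta n ^ l) = J1 l - J2 l" for l
    unfolding c_def J1_def J2_def using lo r2 r1g r1h
    by (intro ann_point[OF hol]) auto
  define Kf where "Kf = (\<lambda>u. (1 / of_nat n) * (\<Sum>l<n. 1 / (u - zeta n ^ l)))"
  have cg: "continuous_on (sphere 0 \<rho>) (\<lambda>u. u - zeta n ^ l)" for \<rho> l by (intro continuous_intros)
  have intg: "(\<lambda>u. f u / (u - zeta n ^ l)) contour_integrable_on circlepath 0 \<rho>"
    if "lo < \<rho>" "\<rho> < hi" "0 < \<rho>" "\<rho> \<noteq> 1" for \<rho> l
  proof (rule circ_integrable_div[OF hol that(1,2,3) _ cg])
    fix u :: complex assume "norm u = \<rho>"
    then show "u - zeta n ^ l \<noteq> 0" using that by auto
  qed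
  have Keq: "f x * Kf x = (\<Sum>l<n. (1 / of_nat n) * (f x / (x - zeta n ^ l)))" for x
    by (simp add: Kf_def sum_distrib_left)
  have H: "((\<lambda>u. f u * Kf u) has_contour_integral ((1 / of_nat n) * (\<Sum>l<n. contour_integral (circlepath 0 \<rho>) (\<lambda>u. f u / (u - zeta n ^ l))))) (circlepath 0 \<rho>)"
    if "lo < \<rho>" "\<rho> < hi" "0 < \<rho>" "\<rho> \<noteq> 1" for \<rho>
  proof -
    have "((\<lambda>x. \<Sum>l<n. (1 / of_nat n) * (f x / (x - zeta n ^ l))) has_contour_integral
        (\<Sum>l<n. (1 / of_nat n) * contour_integral (circlepath 0 \<rho>) (\<lambda>u. f u / (u - zeta n ^ l)))) (circlepath 0 \<rho>)"
      by (intro has_contour_integral_sum has_contour_integral_lmul has_contour_integral_integral intg that) auto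
    then show ?thesis unfolding Keq[symmetric] by (simp add: sum_distrib_left)
  qed
  have H1: "((\<lambda>u. f u * Kf u) has_contour_integral ((1 / of_nat n) * (\<Sum>l<n. J1 l))) (circlepath 0 \<rho>1)"
    unfolding J1_def using H[of \<rho>1] lo1 r1g r1h by auto
  have H2: "((\<lambda>u. f u * Kf u) has_contour_integral ((1 / of_nat n) * (\<Sum>l<n. J2 l))) (circlepath 0 \<rho>2)"
    unfolding J2_def using H[of \<rho>2] lo r2 r1g r1h by auto
  define I0 where "I0 = contour_integral (circlepath 0 1) (\<lambda>u. f u / u)"
  have holu: "(\<lambda>u. f u / u) holomorphic_on ann lo hi"
    using hol lo by (intro holomorphic_intros) (auto simp: ann_mem)
  have I0eq: "I0 = contour_integral (circlepath 0 \<rho>1) (\<lambda>u. f u / u)"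
    unfolding I0_def using lo r2 r1g r1h by (intro cauchy_ann[OF holu]) auto
  have H0: "((\<lambda>u. f u / u) has_contour_integral I0) (circlepath 0 \<rho>1)"
    unfolding I0eq using lo r2 r1g r1h
    by (intro has_contour_integral_integral circ_integrable_div[OF hol]) (auto intro!: continuous_intros)
  have D1: "((\<lambda>u. f u * Kf u - f u / u) has_contour_integral ((1 / of_nat n) * (\<Sum>l<n. J1 l) - I0)) (circlepath 0 \<rho>1)"
    by (rule has_contour_integral_diff[OF H1 H0])
  have Kform: "Kf u = u ^ (n - 1) / (u ^ n - 1)" if "norm u \<noteq> 1" for u
  proof -
    have "norm u ^ n \<noteq> 1"
    proof (cases "norm u < 1")
      case True
      then have "norm u ^ n < 1" using n1 by (simp add: power_less_one_iff)
      then show ?thesis by simp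
    next
      case False
      then have "1 < norm u" using that by simp
      then have "1 < norm u ^ n" using n1 by (simp add: one_less_power)
      then show ?thesis by simp
    qed
    then have "norm (u ^ n) \<noteq> 1" by (simp add: norm_power)
    then have "u ^ n \<noteq> 1" by auto
    then show ?thesis unfolding Kf_def using kernel_sum[OF n1] n1 by simp
  qed
  have b1: "norm ((1 / of_nat n) * (\<Sum>l<n. J1 l) - I0) \<le> (M * (1 / (\<rho>1 * (\<rho>1 ^ n - 1)))) * (2 * pi * \<rho>1)"
  proof (rule has_contour_integral_bound_circlepath[OF D1])
    show "0 \<le> M * (1 / (\<rho>1 * (\<rho>1 ^ n - 1)))" using M r1g by (simp add: one_less_power less_imp_le)
    show "0 < \<rho>1" using r1g by simp
    fix x :: complex assume "norm (x - 0) = \<rho>1"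
    then have nx: "norm x = \<rho>1" by simp
    have "f x * Kf x - f x / x = f x * (x ^ (n - 1) / (x ^ n - 1) - 1 / x)"
      using Kform[of x] nx r1g by (simp add: algebra_simps)
    then have "norm (f x * Kf x - f x / x) = norm (f x) * norm (x ^ (n - 1) / (x ^ n - 1) - 1 / x)"
      by (simp only: norm_mult)
    also have "\<dots> \<le> M * (1 / (\<rho>1 * (\<rho>1 ^ n - 1)))"
      using fb[of x] nx K1_bound[OF n1 nx r1g] M unfolding \<rho>1_def
      by (intro mult_mono) auto
    finally show "norm (f x * Kf x - f x / x) \<le> M * (1 / (\<rho>1 * (\<rho>1 ^ n - 1)))" .
  qed
  have b2: "norm ((1 / of_nat n) * (\<Sum>l<n. J2 l)) \<le> (M * (\<rho>2 ^ (n - 1) / (1 - \<rho>2 ^ n))) * (2 * pi * \<rho>2)"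
  proof (rule has_contour_integral_bound_circlepath[OF H2])
    show "0 \<le> M * (\<rho>2 ^ (n - 1) / (1 - \<rho>2 ^ n))"
    proof -
      have "\<rho>2 ^ n < 1" using r2 n1 by (simp add: power_less_one_iff)
      then show ?thesis using M r2 by (intro mult_nonneg_nonneg divide_nonneg_pos) auto
    qed
    show "0 < \<rho>2" using r2 by simp
    fix x :: complex assume "norm (x - 0) = \<rho>2"
    then have nx: "norm x = \<rho>2" by simp
    have "f x * Kf x = f x * (x ^ (n - 1) / (x ^ n - 1))"
      using Kform[of x] nx r2 by simp
    then have "norm (f x * Kf x) = norm (f x) * norm (x ^ (n - 1) / (x ^ n - 1))"
      by (simp only: norm_mult)
    also have "\<dots> \<le> M * (\<rho>2 ^ (n - 1) / (1 - \<rho>2 ^ n))"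
      using fb[of x] nx K2_bound[OF n1 nx r2] M by (intro mult_mono) auto
    finally show "norm (f x * Kf x) \<le> M * (\<rho>2 ^ (n - 1) / (1 - \<rho>2 ^ n))" .
  qed
  define S where "S = (1 / of_nat n) * (\<Sum>l<n. f (zeta n ^ l))"
  have "c * S = (1 / of_nat n) * (\<Sum>l<n. J1 l) - (1 / of_nat n) * (\<Sum>l<n. J2 l)"
  proof -
    have "c * S = (1 / of_nat n) * (\<Sum>l<n. c * f (zeta n ^ l))" by (simp add: S_def sum_distrib_left mult_ac)
    also have "\<dots> = (1 / of_nat n) * (\<Sum>l<n. J1 l - J2 l)" using pt by simp
    also have "\<dots> = (1 / of_nat n) * (\<Sum>l<n. J1 l) - (1 / of_nat n) * (\<Sum>l<n. J2 l)"
      by (simp only: sum_subtractf right_diff_distrib)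
    finally show ?thesis .
  qed
  then have "c * (S - (1 / c) * I0) = ((1 / of_nat n) * (\<Sum>l<n. J1 l) - I0) - (1 / of_nat n) * (\<Sum>l<n. J2 l)"
    using c0 by (simp add: algebra_simps)
  then have "norm (c * (S - (1 / c) * I0)) \<le> norm ((1 / of_nat n) * (\<Sum>l<n. J1 l) - I0) + norm ((1 / of_nat n) * (\<Sum>l<n. J2 l))"
    by (metis norm_triangle_ineq4)
  then have "2 * pi * norm (S - (1 / c) * I0) \<le> (M * (1 / (\<rho>1 * (\<rho>1 ^ n - 1)))) * (2 * pi * \<rho>1) + (M * (\<rho>2 ^ (n - 1) / (1 - \<rho>2 ^ n))) * (2 * pi * \<rho>2)"
    using b1 b2 by (simp add: norm_mult nc)
  then have "norm (S - (1 / c) * I0) \<le> ((M * (1 / (\<rho>1 * (\<rho>1 ^ n - 1)))) * (2 * pi * \<rho>1) + (M * (\<rho>2 ^ (n - 1) / (1 - \<rho>2 ^ n))) * (2 * pi * \<rho>2)) / (2 * pi)"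
    by (simp add: field_simps)
  also have "\<dots> \<le> 2 * M * \<rho>2 ^ n / (1 - \<rho>2)"
    unfolding \<rho>1_def by (rule final_arith[OF r2 n1 M])
  finally show ?thesis unfolding S_def c_def I0_def .
qed

lemma symb_holo: "symb r s a holomorphic_on (- {0})"
proof -
  have "(\<lambda>x. \<Sum>k\<in>{-int r..int s}. a k * x powi k) holomorphic_on (- {0})"
    by (intro holomorphic_intros) auto
  then show ?thesis by (simp add: symb_def[abs_def])
qed

lemma symb_cont: "S \<subseteq> - {0} \<Longrightarrow> continuous_on S (symb r s a)"
  using holomorphic_on_imp_continuous_on[OF symb_holo] continuous_on_subset by blast

lemma uniform_setup:
  assumes "compact \<Gamma>" "\<Gamma> \<inter> symb r s a ` sphere 0 1 = {}"
  shows "\<exists>\<eta> G. 0 < \<eta> \<and> \<eta> \<le> 1/2 \<and> 0 < G \<and>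
    (\<forall>z\<in>\<Gamma>. \<forall>w. 1 - \<eta> < norm w \<and> norm w < 1 + \<eta> \<longrightarrow> z \<noteq> symb r s a w \<and> norm (1 / (z - symb r s a w)) \<le> G)"
proof -
  have "compact (symb r s a ` sphere 0 1)"
    by (intro compact_continuous_image symb_cont) auto
  then have "closed (symb r s a ` sphere 0 1)" by (rule compact_imp_closed)
  then obtain d where d: "d > 0" and dd: "\<And>z y. z \<in> \<Gamma> \<Longrightarrow> y \<in> symb r s a ` sphere 0 1 \<Longrightarrow> d \<le> dist z y"
    using separate_compact_closed[OF assms(1) _ assms(2)] by blast
  define A0 where "A0 = cball (0::complex) (3/2) - ball 0 (1/2)"
  have cA0: "compact A0" unfolding A0_def by (intro compact_diff) auto
  have A0sub: "A0 \<subseteq> - {0}" by (auto simp: A0_def)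
  have "uniformly_continuous_on A0 (symb r s a)"
    by (rule compact_uniformly_continuous[OF symb_cont[OF A0sub] cA0])
  then obtain e where e: "e > 0" and ee: "\<And>x x'. x \<in> A0 \<Longrightarrow> x' \<in> A0 \<Longrightarrow> dist x' x < e \<Longrightarrow> dist (symb r s a x') (symb r s a x) < d / 2"
    unfolding uniformly_continuous_on_def using d by (metis half_gt_zero)
  define \<eta> where "\<eta> = min e (1/2)"
  have key: "z \<noteq> symb r s a w \<and> norm (1 / (z - symb r s a w)) \<le> 2 / d"
    if z: "z \<in> \<Gamma>" and w: "1 - \<eta> < norm w" "norm w < 1 + \<eta>" for z w
  proof -
    have w0: "w \<noteq> 0" using w by (auto simp: \<eta>_def)
    define w' where "w' = w / of_real (norm w)"
    have nw': "norm w' = 1" using w0 by (simp add: w'_def norm_divide)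
    have wA: "w \<in> A0" using w by (auto simp: A0_def \<eta>_def)
    have w'A: "w' \<in> A0" using nw' by (auto simp: A0_def)
    have "w - w' = w * of_real (1 - 1 / norm w)" using w0 by (simp add: w'_def algebra_simps divide_inverse)
    then have "dist w w' = norm w * \<bar>1 - 1 / norm w\<bar>" by (simp only: dist_norm norm_mult norm_of_real)
    also have "\<dots> = \<bar>norm w - 1\<bar>"
    proof -
      have "norm w * (1 - 1 / norm w) = norm w - 1" using w0 by (simp add: field_simps)
      moreover have "norm w * \<bar>1 - 1 / norm w\<bar> = \<bar>norm w * (1 - 1 / norm w)\<bar>" by (simp add: abs_mult)
      ultimately show ?thesis by simp
    qed
    also have "\<dots> < e" using w by (auto simp: \<eta>_def)
    finally have "dist (symb r s a w) (symb r s a w') < d / 2" using ee[OF w'A wA] by simp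
    moreover have "d \<le> dist z (symb r s a w')" using dd[OF z] nw' by auto
    ultimately have "d / 2 \<le> dist z (symb r s a w)"
      using dist_triangle[of z "symb r s a w'" "symb r s a w"] by (simp add: dist_commute)
    then have nz: "d / 2 \<le> norm (z - symb r s a w)" by (simp add: dist_norm)
    then have "z \<noteq> symb r s a w" using d by auto
    moreover have "norm (1 / (z - symb r s a w)) \<le> 2 / d"
    proof -
      have p: "0 < norm (z - symb r s a w)" using nz d by linarith
      have "norm (1 / (z - symb r s a w)) = 1 / norm (z - symb r s a w)" by (simp add: norm_divide)
      also have "\<dots> \<le> 1 / (d / 2)" using nz d p by (intro divide_left_mono) auto
      also have "\<dots> = 2 / d" by simp
      finally show ?thesis .
    qed
    ultimately show ?thesis by simp
  qed
  show ?thesis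
    using key e d by (intro exI[of _ \<eta>] exI[of _ "2 / d"]) (auto simp: \<eta>_def)
qed

lemma powi_bound:
  fixes R :: real
  assumes "R \<ge> 1" "\<bar>d\<bar> \<le> int D" "x = R \<or> x = 1 / R"
  shows "x powi d \<le> R ^ D"
proof -
  have "R powi d \<le> R powi int D" using assms by (intro power_int_increasing) auto
  moreover have "(1 / R) powi d = R powi (- d)" by (simp add: power_int_minus power_int_inverse divide_inverse)
  moreover have "R powi (- d) \<le> R powi int D" using assms by (intro power_int_increasing) auto
  ultimately show ?thesis using assms(3) by auto
qed

lemma entry_bound:
  assumes "compact \<Gamma>" "\<Gamma> \<inter> symb r s a ` sphere 0 1 = {}"
  shows "\<exists>C \<kappa>. 0 < C \<and> 0 < \<kappa> \<and> \<kappa> < 1 \<and> (\<forall>z\<in>\<Gamma>. \<forall>n\<ge>1. \<forall>d. \<bar>d\<bar> \<le> int D \<longrightarrow>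
     norm ((1 / of_nat n) * (\<Sum>l<n. (zeta n ^ l) powi d / (z - symb r s a (zeta n ^ l)))
      - (1 / (2 * of_real pi * \<i>)) * contour_integral (circlepath 0 1) (\<lambda>u. u powi d / (u * (z - symb r s a u))))
     \<le> C * \<kappa> ^ n)"
proof -
  obtain \<eta> G where eta: "0 < \<eta>" "\<eta> \<le> 1/2" and G: "0 < G"
    and key: "\<And>z w. z \<in> \<Gamma> \<Longrightarrow> 1 - \<eta> < norm w \<Longrightarrow> norm w < 1 + \<eta> \<Longrightarrow> z \<noteq> symb r s a w \<and> norm (1 / (z - symb r s a w)) \<le> G"
    using uniform_setup[OF assms] by blast
  define R where "R = 1 + \<eta> / 2"
  define \<rho>2 where "\<rho>2 = 1 / R"
  have R1: "R > 1" using eta by (simp add: R_def)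
  have r2: "0 < \<rho>2" "\<rho>2 < 1" using R1 by (auto simp: \<rho>2_def)
  have r2lo: "1 - \<eta> < \<rho>2"
  proof -
    have "(1 - \<eta>) * R < 1" using eta by (simp add: R_def algebra_simps power2_eq_square) (smt (verit) mult_pos_pos)
    then show ?thesis using R1 by (simp add: \<rho>2_def field_simps)
  qed
  have r1hi: "1 / \<rho>2 < 1 + \<eta>" using eta by (simp add: \<rho>2_def R_def)
  define M where "M = R ^ D * G"
  have M0: "0 \<le> M" using R1 G by (simp add: M_def)
  have main: "norm ((1 / of_nat n) * (\<Sum>l<n. (zeta n ^ l) powi d / (z - symb r s a (zeta n ^ l)))
      - (1 / (2 * of_real pi * \<i>)) * contour_integral (circlepath 0 1) (\<lambda>u. u powi d / (u * (z - symb r s a u))))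
     \<le> (2 * M / (1 - \<rho>2)) * \<rho>2 ^ n"
    if z: "z \<in> \<Gamma>" and n: "n \<ge> 1" and d: "\<bar>d\<bar> \<le> int D" for z n d
  proof -
    define f where "f = (\<lambda>u. u powi d / (z - symb r s a u))"
    have hol: "f holomorphic_on ann (1 - \<eta>) (1 + \<eta>)"
    proof -
      have sub: "ann (1 - \<eta>) (1 + \<eta>) \<subseteq> - {0}" using eta by (auto simp: ann_mem)
      have "(\<lambda>u. u powi d) holomorphic_on ann (1 - \<eta>) (1 + \<eta>)"
        using sub by (intro holomorphic_intros) auto
      moreover have "(\<lambda>u. z - symb r s a u) holomorphic_on ann (1 - \<eta>) (1 + \<eta>)"
        using holomorphic_on_subset[OF symb_holo sub] by (intro holomorphic_intros)
      moreover have "\<forall>u\<in>ann (1 - \<eta>) (1 + \<eta>). z - symb r s a u \<noteq> 0"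
        using key[OF z] by (auto simp: ann_mem)
      ultimately show ?thesis unfolding f_def by (intro holomorphic_on_divide) auto
    qed
    have fb: "norm (f u) \<le> M" if "norm u = 1 / \<rho>2 \<or> norm u = \<rho>2" for u
    proof -
      have nu: "norm u = R \<or> norm u = 1 / R" using that by (auto simp: \<rho>2_def)
      have r1g: "1 < 1 / \<rho>2" using R1 by (simp add: \<rho>2_def)
      have inA: "1 - \<eta> < norm u" "norm u < 1 + \<eta>" using that r2lo r1hi r2 r1g eta by (elim disjE; linarith)+
      have "f u = u powi d * (1 / (z - symb r s a u))" by (simp add: f_def)
      then have "norm (f u) = norm u powi d * norm (1 / (z - symb r s a u))"
        by (simp only: norm_mult norm_power_int)
      also have "\<dots> \<le> R ^ D * G"
        using powi_bound[OF _ d nu] R1 key[OF z inA] by (intro mult_mono) auto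
      finally show ?thesis by (simp add: M_def)
    qed
    have "norm ((1 / of_nat n) * (\<Sum>l<n. f (zeta n ^ l))
      - (1 / (2 * of_real pi * \<i>)) * contour_integral (circlepath 0 1) (\<lambda>u. f u / u))
     \<le> 2 * M * \<rho>2 ^ n / (1 - \<rho>2)"
      using eta by (intro riemann_core[OF hol _ r2lo r2 r1hi n M0 fb]) auto
    moreover have "(\<lambda>u. f u / u) = (\<lambda>u. u powi d / (u * (z - symb r s a u)))"
      by (simp add: f_def mult.commute)
    ultimately show ?thesis by (simp add: f_def)
  qed
  show ?thesis
  proof (intro exI conjI)
    show "0 < 2 * M / (1 - \<rho>2) + 1"
    proof -
      have "0 \<le> 2 * M / (1 - \<rho>2)" using M0 r2 by (intro divide_nonneg_pos) auto
      then show ?thesis by linarith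
    qed
    show "0 < \<rho>2" "\<rho>2 < 1" using r2 by auto
    show "\<forall>z\<in>\<Gamma>. \<forall>n\<ge>1. \<forall>d. \<bar>d\<bar> \<le> int D \<longrightarrow>
     norm ((1 / of_nat n) * (\<Sum>l<n. (zeta n ^ l) powi d / (z - symb r s a (zeta n ^ l)))
      - (1 / (2 * of_real pi * \<i>)) * contour_integral (circlepath 0 1) (\<lambda>u. u powi d / (u * (z - symb r s a u))))
     \<le> (2 * M / (1 - \<rho>2) + 1) * \<rho>2 ^ n"
    proof (intro ballI allI impI)
      fix z and n :: nat and d :: int assume "z \<in> \<Gamma>" "1 \<le> n" "\<bar>d\<bar> \<le> int D"
      then have "norm ((1 / of_nat n) * (\<Sum>l<n. (zeta n ^ l) powi d / (z - symb r s a (zeta n ^ l)))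
      - (1 / (2 * of_real pi * \<i>)) * contour_integral (circlepath 0 1) (\<lambda>u. u powi d / (u * (z - symb r s a u))))
     \<le> (2 * M / (1 - \<rho>2)) * \<rho>2 ^ n" by (rule main)
      also have "\<dots> \<le> (2 * M / (1 - \<rho>2) + 1) * \<rho>2 ^ n" using r2 by (intro mult_right_mono) auto
      finally show "norm ((1 / of_nat n) * (\<Sum>l<n. (zeta n ^ l) powi d / (z - symb r s a (zeta n ^ l)))
      - (1 / (2 * of_real pi * \<i>)) * contour_integral (circlepath 0 1) (\<lambda>u. u powi d / (u * (z - symb r s a u))))
     \<le> (2 * M / (1 - \<rho>2) + 1) * \<rho>2 ^ n" .
    qed
  qed
qed

definition Hmid :: "nat \<Rightarrow> nat \<Rightarrow> (int \<Rightarrow> complex) \<Rightarrow> complex \<Rightarrow> complex mat" where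
  "Hmid r s a z = mat (s + r) (s + r) (\<lambda>(p,q). (1 / (2 * pi * \<i>)) *
        contour_integral (circlepath 0 1)
          (\<lambda>w. (if p < s then w ^ s else w powi (- int r)) * w powi (int p - int q)
               / (w * (z - symb r s a w))))"

lemma calH_eq: "calH r s a z = calD r s a * Hmid r s a z * calE r s a"
  by (simp add: calH_def Hmid_def)

definition dd :: "nat \<Rightarrow> nat \<Rightarrow> nat \<Rightarrow> nat \<Rightarrow> int" where
  "dd r s x y = (if x < s then int s else - int r) + int x - int y"

lemma exps:
  assumes "n > r + s" "x < s + r" "y < s + r"
  shows "(int (sig r s n x) - int (tau r s n y)) mod int n = dd r s x y mod int n"
proof (cases "x < s")
  case True
  show ?thesis
  proof (cases "y < s")
    case True
    have "int (sig r s n x) - int (tau r s n y) = dd r s x y + (- 1) * int n"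
      using \<open>x < s\<close> True assms by (simp add: sig_def tau_def dd_def of_nat_diff)
    then show ?thesis by (metis mod_mult_self1)
  next
    case False
    have "int (sig r s n x) - int (tau r s n y) = dd r s x y"
      using \<open>x < s\<close> False assms by (simp add: sig_def tau_def dd_def of_nat_diff)
    then show ?thesis by simp
  qed
next
  case False
  show ?thesis
  proof (cases "y < s")
    case True
    have "int (sig r s n x) - int (tau r s n y) = dd r s x y"
      using False True assms by (simp add: sig_def tau_def dd_def of_nat_diff)
    then show ?thesis by simp
  next
    case F2: False
    have "int (sig r s n x) - int (tau r s n y) = dd r s x y + 1 * int n"
      using False F2 assms by (simp add: sig_def tau_def dd_def of_nat_diff)
    then show ?thesis by (metis mod_mult_self1)
  qed
qed

lemma dd_bound: "x < s + r \<Longrightarrow> y < s + r \<Longrightarrow> \<bar>dd r s x y\<bar> \<le> int (2 * (r + s))"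
  unfolding dd_def by auto

lemma integrand_eq:
  "(\<lambda>w. (if p < s then w ^ s else w powi (- int r)) * w powi (int p - int q) / (w * (z - symb r s a w)))
   = (\<lambda>u. u powi dd r s p q / (u * (z - symb r s a u)))"
proof
  fix w :: complex
  show "(if p < s then w ^ s else w powi (- int r)) * w powi (int p - int q) / (w * (z - symb r s a w))
     = w powi dd r s p q / (w * (z - symb r s a w))"
  proof (cases "w = 0")
    case True then show ?thesis by simp
  next
    case False
    have "(if p < s then w ^ s else w powi (- int r)) * w powi (int p - int q) = w powi dd r s p q"
    proof (cases "p < s")
      case True
      have "w ^ s * w powi (int p - int q) = w powi (int s + (int p - int q))"
        using False by (simp add: power_int_add)
      moreover have "int s + (int p - int q) = dd r s p q" using True by (simp add: dd_def)
      ultimately show ?thesis using True by simp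
    next
      case F: False
      have "w powi (- int r) * w powi (int p - int q) = w powi (- int r + (int p - int q))"
        using power_int_add[of w "- int r" "int p - int q"] False by simp
      moreover have "- int r + (int p - int q) = dd r s p q" using F by (simp add: dd_def)
      ultimately show ?thesis using F by simp
    qed
    then show ?thesis by simp
  qed
qed

lemma decomp:
  assumes n: "n > r + s" and z: "\<And>w. norm w = 1 \<Longrightarrow> z \<noteq> symb r s a w"
  shows "Qmat r s a n * resolv r s a n z * Pmat r s a n - calH r s a z
     = calD r s a * ((Q0 r s n * Bmat r s a n z * P0 r s n - Hmid r s a z) * calE r s a)"
proof -
  let ?D = "calD r s a" and ?E = "calE r s a" and ?B = "Bmat r s a n z" and ?Q = "Q0 r s n" and ?P = "P0 r s n"
    and ?H = "Hmid r s a z"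
  have Dc: "?D \<in> carrier_mat (s + r) (s + r)" by (rule calD_carrier)
  have Ec: "?E \<in> carrier_mat (s + r) (s + r)" by (rule calE_carrier)
  have Bc: "?B \<in> carrier_mat n n" by (rule Bmat_carrier)
  have Qc: "?Q \<in> carrier_mat (s + r) n" by (rule Q0_carrier)
  have Pc: "?P \<in> carrier_mat n (s + r)" by (rule P0_carrier)
  have Hc: "?H \<in> carrier_mat (s + r) (s + r)" by (simp add: Hmid_def)
  have QB: "?Q * ?B \<in> carrier_mat (s + r) n" using Qc Bc by simp
  have Y: "?Q * ?B * ?P \<in> carrier_mat (s + r) (s + r)" using QB Pc by simp
  have "Qmat r s a n * resolv r s a n z * Pmat r s a n = ((?D * ?Q) * ?B) * (?P * ?E)"
    by (simp only: Q_fact[OF n] P_fact[OF n] resolv_eq[OF n z])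
  also have "\<dots> = (?D * (?Q * ?B)) * (?P * ?E)" using assoc_mult_mat[OF Dc Qc Bc] by simp
  also have "\<dots> = ?D * ((?Q * ?B) * (?P * ?E))" using assoc_mult_mat[OF Dc QB mult_carrier_mat[OF Pc Ec]] by simp
  also have "(?Q * ?B) * (?P * ?E) = ((?Q * ?B) * ?P) * ?E" using assoc_mult_mat[OF QB Pc Ec] by simp
  finally have L: "Qmat r s a n * resolv r s a n z * Pmat r s a n = ?D * (?Q * ?B * ?P * ?E)" .
  have H: "calH r s a z = ?D * (?H * ?E)" unfolding calH_eq using assoc_mult_mat[OF Dc Hc Ec] by simp
  have "?D * (?Q * ?B * ?P * ?E) - ?D * (?H * ?E) = ?D * (?Q * ?B * ?P * ?E - ?H * ?E)"
    using mult_minus_distrib_mat[OF Dc mult_carrier_mat[OF Y Ec] mult_carrier_mat[OF Hc Ec]] by simp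
  also have "?Q * ?B * ?P * ?E - ?H * ?E = (?Q * ?B * ?P - ?H) * ?E"
    using minus_mult_distrib_mat[OF Y Hc Ec] by simp
  finally show ?thesis using L H by simp
qed

lemma W_entry:
  assumes n: "n > r + s" and x: "x < s + r" and y: "y < s + r"
  shows "(Q0 r s n * Bmat r s a n z * P0 r s n - Hmid r s a z) $$ (x,y)
    = (1 / of_nat n) * (\<Sum>l<n. (zeta n ^ l) powi dd r s x y / (z - symb r s a (zeta n ^ l)))
      - (1 / (2 * of_real pi * \<i>)) * contour_integral (circlepath 0 1) (\<lambda>u. u powi dd r s x y / (u * (z - symb r s a u)))"
proof -
  have n1: "n \<ge> 1" using n by simp
  have QB: "Q0 r s n * Bmat r s a n z \<in> carrier_mat (s + r) n" by (rule mult_carrier_mat[OF Q0_carrier Bmat_carrier])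
  have "(Q0 r s n * Bmat r s a n z * P0 r s n) $$ (x,y) = (Q0 r s n * Bmat r s a n z) $$ (x, tau r s n y)"
    using P0_mult[OF QB x y tau_lt[OF n y]] .
  also have "\<dots> = Bmat r s a n z $$ (sig r s n x, tau r s n y)"
    using Q0_mult[OF Bmat_carrier x tau_lt[OF n y] sig_lt[OF n x]] .
  also have "\<dots> = (1 / of_nat n) * (\<Sum>l<n. (zeta n ^ l) powi dd r s x y / (z - symb r s a (zeta n ^ l)))"
  proof -
    have "(zeta n ^ l) powi (int (sig r s n x) - int (tau r s n y)) = (zeta n ^ l) powi dd r s x y" for l
      using powi_mod[OF zeta_l_n[OF n1], of l "int (sig r s n x) - int (tau r s n y)"]
        powi_mod[OF zeta_l_n[OF n1], of l "dd r s x y"] exps[OF n x y] by simp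
    then show ?thesis using sig_lt[OF n x] tau_lt[OF n y] by (simp add: Bmat_index)
  qed
  finally have A: "(Q0 r s n * Bmat r s a n z * P0 r s n) $$ (x,y) = (1 / of_nat n) * (\<Sum>l<n. (zeta n ^ l) powi dd r s x y / (z - symb r s a (zeta n ^ l)))" .
  have B: "Hmid r s a z $$ (x,y) = (1 / (2 * of_real pi * \<i>)) * contour_integral (circlepath 0 1) (\<lambda>u. u powi dd r s x y / (u * (z - symb r s a u)))"
    using x y by (simp add: Hmid_def integrand_eq)
  have "(Q0 r s n * Bmat r s a n z * P0 r s n - Hmid r s a z) $$ (x,y) = (Q0 r s n * Bmat r s a n z * P0 r s n) $$ (x,y) - Hmid r s a z $$ (x,y)"
    using x y by (simp add: Hmid_def)
  then show ?thesis using A B by simp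
qed

theorem proposition5p3:
  fixes r s :: nat and a :: "int \<Rightarrow> complex" and \<Gamma> :: "complex set"
  assumes "s \<ge> 1" and "a (int s) \<noteq> 0"
    and "compact \<Gamma>" and "\<Gamma> \<inter> symb r s a ` sphere 0 1 = {}"
  shows "\<exists>C \<kappa>. C > 0 \<and> 0 < \<kappa> \<and> \<kappa> < 1 \<and>
    (\<forall>z\<in>\<Gamma>. \<forall>n. n > r + s \<longrightarrow>
       opnorm (Qmat r s a n * resolv r s a n z * Pmat r s a n - calH r s a z) \<le> C * \<kappa> ^ n)"
proof -
  obtain C0 \<kappa> where C0: "0 < C0" and k: "0 < \<kappa>" "\<kappa> < 1"
    and eb: "\<And>z n d. z \<in> \<Gamma> \<Longrightarrow> n \<ge> 1 \<Longrightarrow> \<bar>d\<bar> \<le> int (2 * (r + s)) \<Longrightarrow>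
     norm ((1 / of_nat n) * (\<Sum>l<n. (zeta n ^ l) powi d / (z - symb r s a (zeta n ^ l)))
      - (1 / (2 * of_real pi * \<i>)) * contour_integral (circlepath 0 1) (\<lambda>u. u powi d / (u * (z - symb r s a u))))
     \<le> C0 * \<kappa> ^ n"
    using entry_bound[OF assms(3,4), of "2 * (r + s)"] by blast
  let ?N = "s + r"
  define K where "K = (\<Sum>p<?N. \<Sum>q<?N. \<Sum>x<?N. \<Sum>y<?N. cmod (calD r s a $$ (p,x)) * cmod (calE r s a $$ (y,q)))"
  have K0: "0 \<le> K" unfolding K_def by (intro sum_nonneg mult_nonneg_nonneg) auto
  show ?thesis
  proof (intro exI conjI ballI allI impI)
    show "0 < (K + 1) * C0" using K0 C0 by simp
    show "0 < \<kappa>" "\<kappa> < 1" by (rule k)+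
    fix z n assume z: "z \<in> \<Gamma>" and n: "r + s < n"
    have zn: "\<And>w. norm w = 1 \<Longrightarrow> z \<noteq> symb r s a w" using z assms(4) by auto
    let ?W = "Q0 r s n * Bmat r s a n z * P0 r s n - Hmid r s a z"
    have Wc: "?W \<in> carrier_mat ?N ?N" by (intro minus_carrier_mat) (simp add: Hmid_def)
    have Wb: "cmod (?W $$ (x,y)) \<le> C0 * \<kappa> ^ n" if "x < ?N" "y < ?N" for x y
      unfolding W_entry[OF n that] using eb[OF z _ dd_bound[OF that]] n by simp
    have X: "calD r s a * (?W * calE r s a) \<in> carrier_mat ?N ?N"
      using calD_carrier Wc calE_carrier by (metis mult_carrier_mat)
    have "opnorm (Qmat r s a n * resolv r s a n z * Pmat r s a n - calH r s a z)
       = opnorm (calD r s a * (?W * calE r s a))" by (simp only: decomp[OF n zn])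
    also have "\<dots> \<le> (\<Sum>p<?N. \<Sum>q<?N. cmod ((calD r s a * (?W * calE r s a)) $$ (p,q)))"
      by (rule opnorm_bound[OF X])
    also have "\<dots> \<le> K * (C0 * \<kappa> ^ n)"
      unfolding K_def by (rule triple_bound[OF calD_carrier Wc calE_carrier Wb])
    also have "\<dots> \<le> (K + 1) * C0 * \<kappa> ^ n"
      using C0 k by (simp add: algebra_simps)
    finally show "opnorm (Qmat r s a n * resolv r s a n z * Pmat r s a n - calH r s a z) \<le> (K + 1) * C0 * \<kappa> ^ n" .
  qed
qed

end
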